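(* Let $T$ be a random draft tree of depth $D$ generated by Greedy sampling (as described in the context), and let UniVer be run on $T$. Then UniVer is lossless: for every integer $L \ge D+1$ and every sequence $o=(o_0,o_1,\dots,o_L)$ with $o_0=r$ and $o_1,\dots,o_L\in\Sigma$, $$\sum_{T} p_{\rm draft}(T)\sum_{o'}\frac{\mathcal{M}_b(o)\,\Pr[\mathrm{UniVer}=o'\mid T]}{\mathcal{M}_b(o')}=\mathcal{M}_b(o),$$ where $o'$ ranges over all prefixes $o'=(o_0,\dots,o_\ell)$, $1\le \ell\le L$, of $o$ (including $o$ itself).
   Context: Let $\Sigma$ be a finite vocabulary. A target model and a draft model are given by conditional distributions $\mathcal{M}_b(\cdot\mid x)$ and $\mathcal{M}_s(\cdot\mid x)$ on $\Sigma$ for every context $x$ (a fixed current context followed by a finite sequence of tokens). For $x\in\mathbb{R}$, $[x]_+=\max\{x,0\}$. Draft tree. A draft tree $T$ has a fixed rooted topology of depth $D$ (root $r$ at depth $0$; each non-leaf node has a fixed number of children). The root $r$ represents the current context; every other node carries a token of $\Sigma$, and a node $v$ is identified with the token sequence along the path from $r$ to $v$, so $\mathcal{M}_b(\cdot\mid v),\mathcal{M}_s(\cdot\mid v)$ are the conditional distributions given that sequence. Tokens are generated top-down by Greedy sampling: if a non-leaf $v$ has $m$ children, its children $\mathcal{C}(v)=\{u_1,\dots,u_m\}$ consist of $u_1,\dots,u_{m-1}$, the $m-1$ most probable tokens under $\mathcal{M}_s(\cdot\mid v)$ (set $H_v=\{u_1,\dots,u_{m-1}\}$, ties broken by a fixed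 rule), and $u_m$ drawn from the residual distribution $\mathcal{M}_s^\neg(\cdot\mid v)$, defined by $\mathcal{M}_s^\neg(x\mid v)=\mathcal{M}_s(x\mid v)/\sum_{y\notin H_v}\mathcal{M}_s(y\mid v)$ for $x\notin H_v$ and $\mathcal{M}_s^\neg(x\mid v)=0$ for $x\in H_v$. $p_{\rm draft}$ denotes the resulting distribution over draft trees. UniVer, Allocation Phase: set $\tilde p_r=1$. Top-down, for each non-leaf $v$ with already computed $\tilde p_v$, let $Z_v=1-\tilde p_v+\sum_{x\in\Sigma}[\tilde p_v\mathcal{M}_b(x\mid v)-\mathcal{M}_s^\neg(x\mid v)]_+$, $p_v(u_m)=\min\{1,\tilde p_v\mathcal{M}_b(u_m\mid v)/\mathcal{M}_s^\neg(u_m\mid v)\}$, and for every $u\in\Sigma\setminus\{u_m\}$, $p_v(u)=[\tilde p_v\mathcal{M}_b(u\mid v)-\mathcal{M}_s^\neg(u\mid v)]_+\,(1-p_v(u_m))/Z_v$; let $p_v(\neg v)=1-\sum_{u\in\Sigma}p_v(u)$. Then set $\tilde p_{u_j}=p_v(u_j)/(1-\sum_{i<j}p_v(u_i))$ for $j=1,\dots,m$ and $\tilde p_v^{\rm res}=1-p_v(\neg v)/(1-\sum_{i=1}^m p_v(u_i))$. UniVer, Decision Phase: draw independent $\eta_v\sim U(0,1)$ for all nodes and visit nodes in post-order (for each node, recursively visit the subtrees of $u_1,\dots,u_m$ in this order, then the node itself). At a leaf $v$: if $\eta_v<\tilde p_v$, stop and output the path sequence of $v$ followed by $y\sim\mathcal{M}_b(\cdot\mid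 v)$. At a non-leaf $v$: if $\eta_v<\tilde p_v^{\rm res}$, stop and output the path sequence of $v$ followed by $y\in\Sigma\setminus\mathcal{C}(v)$ sampled with probability $p_v(y)/\sum_{u\notin\mathcal{C}(v)}p_v(u)$. Otherwise continue to the next node. For $o=(o_0,\dots,o_\ell)$ with $o_0=r$, $\mathcal{M}_b(o)=\prod_{i=1}^{\ell}\mathcal{M}_b(o_i\mid o_0,\dots,o_{i-1})$. $\Pr[\mathrm{UniVer}=o'\mid T]$ is the probability that UniVer outputs exactly the sequence $o'$ on tree $T$. *)

theory Defs
  imports Complex_Main "HOL-Library.FuncSet"
begin

text \<open>Nodes are addressed by positions: lists of 0-based
  child indices from the root; the root is the empty position.\<close>

datatype topo = Nd "topo list"

primrec kids :: "topo \<Rightarrow> topo list" where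
  "kids (Nd ts) = ts"

primrec height :: "topo \<Rightarrow> nat" and height_list :: "topo list \<Rightarrow> nat" where
  "height (Nd ts) = height_list ts"
| "height_list [] = 0"
| "height_list (t # ts) = max (Suc (height t)) (height_list ts)"

primrec postorder :: "topo \<Rightarrow> nat list list"
  and postorder_list :: "nat \<Rightarrow> topo list \<Rightarrow> nat list list" where
  "postorder (Nd ts) = postorder_list 0 ts @ [[]]"
| "postorder_list i [] = []"
| "postorder_list i (t # ts) = map ((#) i) (postorder t) @ postorder_list (Suc i) ts"

fun subtopo :: "topo \<Rightarrow> nat list \<Rightarrow> topo" where
  "subtopo t [] = t"
| "subtopo t (i # p) = subtopo (kids t ! i) p"

definition nch :: "topo \<Rightarrow> nat list \<Rightarrow> nat" where
  "nch t p = length (kids (subtopo t p))"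

text \<open>A draft tree of topology t is a token labelling of the non-root positions.\<close>
definition draft_trees :: "topo \<Rightarrow> (nat list \<Rightarrow> 'a) set" where
  "draft_trees t = PiE (set (postorder t) - {[]}) (\<lambda>_. UNIV)"

text \<open>Token sequence along the path from the root to the node at position v.\<close>
definition tokpath :: "(nat list \<Rightarrow> 'a) \<Rightarrow> nat list \<Rightarrow> 'a list" where
  "tokpath lab v = map (\<lambda>k. lab (take k v)) [1..<Suc (length v)]"

definition seqprob :: "('a list \<Rightarrow> 'a \<Rightarrow> real) \<Rightarrow> 'a list \<Rightarrow> real" where
  "seqprob M os = (\<Prod>i<length os. M (take i os) (os ! i))"

definition pos_part :: "real \<Rightarrow> real" where
  "pos_part x = max x 0"

definition res_dist :: "('a::finite list \<Rightarrow> 'a \<Rightarrow> real) \<Rightarrow> 'a set \<Rightarrow> 'a list \<Rightarrow> 'a \<Rightarrow> real" where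
  "res_dist Ms H ctx x = (if x \<in> H then 0 else Ms ctx x / (\<Sum>y\<in>UNIV - H. Ms ctx y))"

text \<open>Greedy-sampling probability of a draft tree.  gtop ctx k is the
  (fixed, tie-broken) list of the k most probable tokens under Ms(.|ctx).\<close>
definition pdraft :: "('a::finite list \<Rightarrow> 'a \<Rightarrow> real) \<Rightarrow> ('a list \<Rightarrow> nat \<Rightarrow> 'a list)
    \<Rightarrow> topo \<Rightarrow> (nat list \<Rightarrow> 'a) \<Rightarrow> real" where
  "pdraft Ms gtop t lab =
     (\<Prod>v\<in>{v \<in> set (postorder t). 0 < nch t v}.
        (let ctx = tokpath lab v; m = nch t v in
         if map (\<lambda>i. lab (v @ [i])) [0..<m - 1] = gtop ctx (m - 1)
         then res_dist Ms (set (gtop ctx (m - 1))) ctx (lab (v @ [m - 1]))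
         else 0))"

text \<open>Allocation at a non-leaf v with already computed value pt (p-tilde):
  returns the function u \<mapsto> p_v(u).\<close>
definition alloc :: "('a::finite list \<Rightarrow> 'a \<Rightarrow> real) \<Rightarrow> ('a list \<Rightarrow> 'a \<Rightarrow> real)
    \<Rightarrow> ('a list \<Rightarrow> nat \<Rightarrow> 'a list) \<Rightarrow> topo \<Rightarrow> (nat list \<Rightarrow> 'a) \<Rightarrow> nat list \<Rightarrow> real \<Rightarrow> 'a \<Rightarrow> real" where
  "alloc Mb Ms gtop t lab v pt =
     (let ctx = tokpath lab v; m = nch t v; H = set (gtop ctx (m - 1));
          um = lab (v @ [m - 1]); R = res_dist Ms H ctx;
          Z = 1 - pt + (\<Sum>x\<in>UNIV. pos_part (pt * Mb ctx x - R x));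
          pum = min 1 (pt * Mb ctx um / R um)
      in (\<lambda>u. if u = um then pum else pos_part (pt * Mb ctx u - R u) * (1 - pum) / Z))"

text \<open>p-tilde of the (j+1)-th child of v, given p-tilde of v.\<close>
definition child_ptil :: "('a::finite list \<Rightarrow> 'a \<Rightarrow> real) \<Rightarrow> ('a list \<Rightarrow> 'a \<Rightarrow> real)
    \<Rightarrow> ('a list \<Rightarrow> nat \<Rightarrow> 'a list) \<Rightarrow> topo \<Rightarrow> (nat list \<Rightarrow> 'a) \<Rightarrow> nat list \<Rightarrow> real \<Rightarrow> nat \<Rightarrow> real" where
  "child_ptil Mb Ms gtop t lab v pt j =
     (let p = alloc Mb Ms gtop t lab v pt
      in p (lab (v @ [j])) / (1 - (\<Sum>i<j. p (lab (v @ [i])))))"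

fun ptil_from :: "('a::finite list \<Rightarrow> 'a \<Rightarrow> real) \<Rightarrow> ('a list \<Rightarrow> 'a \<Rightarrow> real)
    \<Rightarrow> ('a list \<Rightarrow> nat \<Rightarrow> 'a list) \<Rightarrow> topo \<Rightarrow> (nat list \<Rightarrow> 'a) \<Rightarrow> nat list \<Rightarrow> real \<Rightarrow> nat list \<Rightarrow> real" where
  "ptil_from Mb Ms gtop t lab v pt [] = pt"
| "ptil_from Mb Ms gtop t lab v pt (j # js) =
     ptil_from Mb Ms gtop t lab (v @ [j]) (child_ptil Mb Ms gtop t lab v pt j) js"

definition ptil :: "('a::finite list \<Rightarrow> 'a \<Rightarrow> real) \<Rightarrow> ('a list \<Rightarrow> 'a \<Rightarrow> real)
    \<Rightarrow> ('a list \<Rightarrow> nat \<Rightarrow> 'a list) \<Rightarrow> topo \<Rightarrow> (nat list \<Rightarrow> 'a) \<Rightarrow> nat list \<Rightarrow> real" where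
  "ptil Mb Ms gtop t lab p = ptil_from Mb Ms gtop t lab [] 1 p"

definition pres :: "('a::finite list \<Rightarrow> 'a \<Rightarrow> real) \<Rightarrow> ('a list \<Rightarrow> 'a \<Rightarrow> real)
    \<Rightarrow> ('a list \<Rightarrow> nat \<Rightarrow> 'a list) \<Rightarrow> topo \<Rightarrow> (nat list \<Rightarrow> 'a) \<Rightarrow> nat list \<Rightarrow> real" where
  "pres Mb Ms gtop t lab v =
     (let p = alloc Mb Ms gtop t lab v (ptil Mb Ms gtop t lab v); m = nch t v
      in 1 - (1 - (\<Sum>u\<in>UNIV. p u)) / (1 - (\<Sum>i<m. p (lab (v @ [i])))))"

text \<open>Stopping threshold of node v in the decision phase.\<close>
definition stopq :: "('a::finite list \<Rightarrow> 'a \<Rightarrow> real) \<Rightarrow> ('a list \<Rightarrow> 'a \<Rightarrow> real)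
    \<Rightarrow> ('a list \<Rightarrow> nat \<Rightarrow> 'a list) \<Rightarrow> topo \<Rightarrow> (nat list \<Rightarrow> 'a) \<Rightarrow> nat list \<Rightarrow> real" where
  "stopq Mb Ms gtop t lab v =
     (if nch t v = 0 then ptil Mb Ms gtop t lab v else pres Mb Ms gtop t lab v)"

text \<open>Pr[eta < q] for eta ~ U(0,1).\<close>
definition unif_lt :: "real \<Rightarrow> real" where
  "unif_lt q = max 0 (min 1 q)"

text \<open>Probability of emitting token y after stopping at node v.\<close>
definition emit :: "('a::finite list \<Rightarrow> 'a \<Rightarrow> real) \<Rightarrow> ('a list \<Rightarrow> 'a \<Rightarrow> real)
    \<Rightarrow> ('a list \<Rightarrow> nat \<Rightarrow> 'a list) \<Rightarrow> topo \<Rightarrow> (nat list \<Rightarrow> 'a) \<Rightarrow> nat list \<Rightarrow> 'a \<Rightarrow> real" where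
  "emit Mb Ms gtop t lab v y =
     (if nch t v = 0 then Mb (tokpath lab v) y
      else (let p = alloc Mb Ms gtop t lab v (ptil Mb Ms gtop t lab v);
                C = (\<lambda>i. lab (v @ [i])) ` {..<nch t v}
            in if y \<in> C then 0 else p y / (\<Sum>u\<in>UNIV - C. p u)))"

text \<open>Pr[UniVer = o' | T]: nodes are visited in post-order with independent
  uniform thresholds; the output after stopping at v is tokpath v followed by
  the emitted token.\<close>
definition univer_prob :: "('a::finite list \<Rightarrow> 'a \<Rightarrow> real) \<Rightarrow> ('a list \<Rightarrow> 'a \<Rightarrow> real)
    \<Rightarrow> ('a list \<Rightarrow> nat \<Rightarrow> 'a list) \<Rightarrow> topo \<Rightarrow> (nat list \<Rightarrow> 'a) \<Rightarrow> 'a list \<Rightarrow> real" where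
  "univer_prob Mb Ms gtop t lab os =
     (let po = postorder t in
      \<Sum>i<length po.
        (\<Prod>j<i. 1 - unif_lt (stopq Mb Ms gtop t lab (po ! j)))
        * unif_lt (stopq Mb Ms gtop t lab (po ! i))
        * (if length os = Suc (length (po ! i)) \<and> take (length (po ! i)) os = tokpath lab (po ! i)
           then emit Mb Ms gtop t lab (po ! i) (last os) else 0))"

end

theory Submission
  imports Defs
begin

definition shiftM :: "'a \<Rightarrow> ('a list \<Rightarrow> 'b) \<Rightarrow> 'a list \<Rightarrow> 'b" where
  "shiftM a M = (\<lambda>ctx. M (a # ctx))"

lemma shiftM_apply: "shiftM a M ctx = M (a # ctx)"
  by (simp add: shiftM_def)

definition sl :: "(nat list \<Rightarrow> 'a) \<Rightarrow> nat \<Rightarrow> nat list \<Rightarrow> 'a" where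
  "sl lab i = (\<lambda>p. lab (i # p))"

lemma sl_apply: "sl lab i p = lab (i # p)"
  by (simp add: sl_def)

lemma tokpath_Nil[simp]: "tokpath lab [] = []"
  by (simp add: tokpath_def)

lemma tokpath_Cons: "tokpath lab (i # p) = lab [i] # tokpath (sl lab i) p"
  unfolding tokpath_def
  by (simp add: upt_conv_Cons map_Suc_upt[symmetric] sl_apply del: upt_Suc)

lemma length_tokpath[simp]: "length (tokpath lab v) = length v"
  unfolding tokpath_def by (simp only: length_map length_upt)

lemma tokpath_upd[simp]: "tokpath (lab([] := x)) v = tokpath lab v"
  unfolding tokpath_def by (rule map_cong[OF refl]) auto

lemma nch_Cons[simp]: "nch (Nd ts) (i # p) = nch (ts ! i) p"
  by (simp add: nch_def)

lemma nch_Nil[simp]: "nch (Nd ts) [] = length ts"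
  by (simp add: nch_def)

lemma res_dist_Cons: "res_dist Ms H (a # ctx) = res_dist (shiftM a Ms) H ctx"
  by (simp add: res_dist_def fun_eq_iff shiftM_apply)

lemma alloc_Cons:
  "alloc Mb Ms gtop (Nd ts) lab (i # v) q =
   alloc (shiftM (lab [i]) Mb) (shiftM (lab [i]) Ms) (shiftM (lab [i]) gtop) (ts ! i) (sl lab i) v q"
  unfolding alloc_def Let_def by (simp add: tokpath_Cons res_dist_Cons fun_eq_iff sl_apply shiftM_apply)

lemma child_ptil_Cons:
  "child_ptil Mb Ms gtop (Nd ts) lab (i # v) q j =
   child_ptil (shiftM (lab [i]) Mb) (shiftM (lab [i]) Ms) (shiftM (lab [i]) gtop) (ts ! i) (sl lab i) v q j"
  unfolding child_ptil_def Let_def by (simp add: alloc_Cons sl_apply)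

lemma ptil_from_Cons:
  "ptil_from Mb Ms gtop (Nd ts) lab (i # v) q p =
   ptil_from (shiftM (lab [i]) Mb) (shiftM (lab [i]) Ms) (shiftM (lab [i]) gtop) (ts ! i) (sl lab i) v q p"
proof (induction p arbitrary: v q)
  case Nil
  then show ?case by simp
next
  case (Cons j p)
  show ?case using Cons.IH[of "v @ [j]"] by (simp add: child_ptil_Cons)
qed

lemma alloc_upd[simp]: "alloc Mb Ms gtop t (lab([] := x)) = alloc Mb Ms gtop t lab"
  unfolding alloc_def Let_def by (simp add: fun_eq_iff)

lemma child_ptil_upd[simp]: "child_ptil Mb Ms gtop t (lab([] := x)) = child_ptil Mb Ms gtop t lab"
  unfolding child_ptil_def Let_def by (simp add: fun_eq_iff)

lemma ptil_from_upd[simp]: "ptil_from Mb Ms gtop t (lab([] := x)) v q p = ptil_from Mb Ms gtop t lab v q p"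
  by (induction p arbitrary: v q) simp_all

lemma pdraft_upd[simp]: "pdraft Ms gtop t (lab([] := x)) = pdraft Ms gtop t lab"
  unfolding pdraft_def Let_def by (intro prod.cong refl) simp

section \<open>Generalised quantities with arbitrary starting value\<close>

definition ptilg where
  "ptilg Mb Ms gtop t lab pt p = ptil_from Mb Ms gtop t lab [] pt p"

definition presg where
  "presg Mb Ms gtop t lab pt v =
     (let p = alloc Mb Ms gtop t lab v (ptilg Mb Ms gtop t lab pt v); m = nch t v
      in 1 - (1 - (\<Sum>u\<in>UNIV. p u)) / (1 - (\<Sum>i<m. p (lab (v @ [i])))))"

definition stopg where
  "stopg Mb Ms gtop t lab pt v =
     unif_lt (if nch t v = 0 then ptilg Mb Ms gtop t lab pt v else presg Mb Ms gtop t lab pt v)"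

definition emitg where
  "emitg Mb Ms gtop t lab pt v y =
     (if nch t v = 0 then Mb (tokpath lab v) y
      else (let p = alloc Mb Ms gtop t lab v (ptilg Mb Ms gtop t lab pt v);
                C = (\<lambda>i. lab (v @ [i])) ` {..<nch t v}
            in if y \<in> C then 0 else p y / (\<Sum>u\<in>UNIV - C. p u)))"

definition outv where
  "outv Mb Ms gtop t lab pt \<Phi> v = (\<Sum>y\<in>UNIV. emitg Mb Ms gtop t lab pt v y * \<Phi> (tokpath lab v @ [y]))"

lemma ptil_ptilg: "ptil Mb Ms gtop t lab = ptilg Mb Ms gtop t lab 1"
  by (simp add: ptil_def ptilg_def fun_eq_iff)

lemma stopq_stopg: "unif_lt (stopq Mb Ms gtop t lab v) = stopg Mb Ms gtop t lab 1 v"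
  by (simp add: stopq_def stopg_def pres_def presg_def ptil_ptilg)

lemma emit_emitg: "emit Mb Ms gtop t lab v y = emitg Mb Ms gtop t lab 1 v y"
  by (simp add: emit_def emitg_def ptil_ptilg)

lemma ptilg_Cons:
  "ptilg Mb Ms gtop (Nd ts) lab pt (i # p) =
   ptilg (shiftM (lab [i]) Mb) (shiftM (lab [i]) Ms) (shiftM (lab [i]) gtop) (ts ! i) (sl lab i)
     (child_ptil Mb Ms gtop (Nd ts) lab [] pt i) p"
  by (simp add: ptilg_def ptil_from_Cons)

lemma ptilg_Nil[simp]: "ptilg Mb Ms gtop t lab pt [] = pt"
  by (simp add: ptilg_def)

lemma presg_Cons:
  "presg Mb Ms gtop (Nd ts) lab pt (i # p) =
   presg (shiftM (lab [i]) Mb) (shiftM (lab [i]) Ms) (shiftM (lab [i]) gtop) (ts ! i) (sl lab i)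
     (child_ptil Mb Ms gtop (Nd ts) lab [] pt i) p"
  unfolding presg_def Let_def by (simp add: ptilg_Cons alloc_Cons sl_apply)

lemma stopg_Cons:
  "stopg Mb Ms gtop (Nd ts) lab pt (i # p) =
   stopg (shiftM (lab [i]) Mb) (shiftM (lab [i]) Ms) (shiftM (lab [i]) gtop) (ts ! i) (sl lab i)
     (child_ptil Mb Ms gtop (Nd ts) lab [] pt i) p"
  unfolding stopg_def by (simp add: ptilg_Cons presg_Cons)

lemma emitg_Cons:
  "emitg Mb Ms gtop (Nd ts) lab pt (i # p) y =
   emitg (shiftM (lab [i]) Mb) (shiftM (lab [i]) Ms) (shiftM (lab [i]) gtop) (ts ! i) (sl lab i)
     (child_ptil Mb Ms gtop (Nd ts) lab [] pt i) p y"
  unfolding emitg_def Let_def by (simp add: ptilg_Cons alloc_Cons tokpath_Cons sl_apply shiftM_apply)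

lemma outv_Cons:
  "outv Mb Ms gtop (Nd ts) lab pt \<Phi> (i # p) =
   outv (shiftM (lab [i]) Mb) (shiftM (lab [i]) Ms) (shiftM (lab [i]) gtop) (ts ! i) (sl lab i)
     (child_ptil Mb Ms gtop (Nd ts) lab [] pt i) (\<lambda>w. \<Phi> (lab [i] # w)) p"
  unfolding outv_def by (simp add: emitg_Cons tokpath_Cons)

lemma ptilg_upd[simp]: "ptilg Mb Ms gtop t (lab([] := x)) = ptilg Mb Ms gtop t lab"
  by (simp add: ptilg_def fun_eq_iff)

lemma stopg_upd[simp]: "stopg Mb Ms gtop t (lab([] := x)) = stopg Mb Ms gtop t lab"
  by (simp add: stopg_def presg_def fun_eq_iff)

lemma emitg_upd[simp]: "emitg Mb Ms gtop t (lab([] := x)) = emitg Mb Ms gtop t lab"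
  by (simp add: emitg_def fun_eq_iff)

lemma outv_upd[simp]: "outv Mb Ms gtop t (lab([] := x)) = outv Mb Ms gtop t lab"
  by (simp add: outv_def fun_eq_iff)

section \<open>Sequential stopping\<close>

fun sst :: "('v \<Rightarrow> real) \<Rightarrow> ('v \<Rightarrow> real) \<Rightarrow> 'v list \<Rightarrow> real" where
  "sst q e [] = 0"
| "sst q e (v # vs) = q v * e v + (1 - q v) * sst q e vs"

fun pss :: "('v \<Rightarrow> real) \<Rightarrow> 'v list \<Rightarrow> real" where
  "pss q [] = 1"
| "pss q (v # vs) = (1 - q v) * pss q vs"

lemma sst_append: "sst q e (xs @ ys) = sst q e xs + pss q xs * sst q e ys"
  by (induction xs) (simp_all add: algebra_simps)

lemma pss_append: "pss q (xs @ ys) = pss q xs * pss q ys"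
  by (induction xs) simp_all

lemma sst_map: "sst q e (map f xs) = sst (\<lambda>x. q (f x)) (\<lambda>x. e (f x)) xs"
  by (induction xs) simp_all

lemma pss_map: "pss q (map f xs) = pss (\<lambda>x. q (f x)) xs"
  by (induction xs) simp_all

lemma sst_cong: "(\<And>v. v \<in> set xs \<Longrightarrow> q v = q' v) \<Longrightarrow> (\<And>v. v \<in> set xs \<Longrightarrow> e v = e' v)
   \<Longrightarrow> sst q e xs = sst q' e' xs"
  by (induction xs) simp_all

lemma pss_cong: "(\<And>v. v \<in> set xs \<Longrightarrow> q v = q' v) \<Longrightarrow> pss q xs = pss q' xs"
  by (induction xs) simp_all

lemma pss_concat: "pss q (concat (map F [0..<m])) = (\<Prod>i<m. pss q (F i))"
  by (induction m) (simp_all add: pss_append)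

lemma sst_concat: "sst q e (concat (map F [0..<m])) = (\<Sum>i<m. (\<Prod>j<i. pss q (F j)) * sst q e (F i))"
  by (induction m) (simp_all add: sst_append pss_append pss_concat)

lemma sst_sum: "finite S \<Longrightarrow> sst q (\<lambda>v. \<Sum>l\<in>S. f l v) xs = (\<Sum>l\<in>S. sst q (f l) xs)"
  by (induction xs) (simp_all add: sum.distrib sum_distrib_left)

lemma sst_as_sum: "(\<Sum>i<length xs. (\<Prod>j<i. 1 - q (xs ! j)) * q (xs ! i) * e (xs ! i)) = sst q e xs"
proof (induction xs)
  case Nil
  then show ?case by simp
next
  case (Cons x xs)
  have "(\<Sum>i<length (x # xs). (\<Prod>j<i. 1 - q ((x # xs) ! j)) * q ((x # xs) ! i) * e ((x # xs) ! i))
      = q x * e x + (\<Sum>i<length xs. (\<Prod>j<Suc i. 1 - q ((x # xs) ! j)) * q (xs ! i) * e (xs ! i))"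
    by (simp add: sum.lessThan_Suc_shift del: sum.lessThan_Suc)
  also have "\<dots> = q x * e x + (1 - q x) * (\<Sum>i<length xs. (\<Prod>j<i. 1 - q (xs ! j)) * q (xs ! i) * e (xs ! i))"
    by (simp add: prod.lessThan_Suc_shift sum_distrib_left mult.assoc del: prod.lessThan_Suc)
  finally show ?case using Cons by simp
qed

lemma postorder_list_eq:
  "postorder_list k ts = concat (map (\<lambda>i. map ((#) (k + i)) (postorder (ts ! i))) [0..<length ts])"
proof (induction ts arbitrary: k)
  case Nil
  then show ?case by simp
next
  case (Cons t ts)
  show ?case
    by (simp add: Cons.IH upt_conv_Cons map_Suc_upt[symmetric] o_def del: upt_Suc)
qed

lemma postorder_Nd:
  "postorder (Nd ts) = concat (map (\<lambda>i. map ((#) i) (postorder (ts ! i))) [0..<length ts]) @ [[]]"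
  by (simp add: postorder_list_eq)

declare postorder.simps(1)[simp del]

lemma set_postorder_Nd:
  "v \<in> set (postorder (Nd ts)) \<longleftrightarrow> v = [] \<or> (\<exists>i p. v = i # p \<and> i < length ts \<and> p \<in> set (postorder (ts ! i)))"
  by (auto simp del: postorder.simps simp add: postorder_Nd)

lemma Nil_in_postorder[simp]: "[] \<in> set (postorder t)"
  by (cases t) (simp add: set_postorder_Nd)

lemma height_list_nth: "i < length ts \<Longrightarrow> Suc (height (ts ! i)) \<le> height_list ts"
proof (induction ts arbitrary: i)
  case Nil
  then show ?case by simp
next
  case (Cons t ts)
  show ?case
  proof (cases i)
    case 0
    then show ?thesis by simp
  next
    case (Suc n)
    with Cons.prems have "Suc (height (ts ! n)) \<le> height_list ts" by (intro Cons.IH) simp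
    with Suc show ?thesis by simp
  qed
qed

lemma height_nth: "i < length ts \<Longrightarrow> Suc (height (ts ! i)) \<le> height (Nd ts)"
  by (simp add: height_list_nth)

lemma length_postorder_le: "v \<in> set (postorder t) \<Longrightarrow> length v \<le> height t"
proof (induction t arbitrary: v)
  case (Nd ts)
  show ?case
  proof (cases v)
    case Nil
    then show ?thesis by simp
  next
    case (Cons i p)
    with Nd.prems have i: "i < length ts" and p: "p \<in> set (postorder (ts ! i))"
      by (auto simp: set_postorder_Nd)
    have "length p \<le> height (ts ! i)" using Nd.IH[OF nth_mem[OF i] p] .
    with height_nth[OF i] Cons show ?thesis by simp
  qed
qed

definition US where
  "US Mb Ms gtop t lab pt \<Phi> = sst (stopg Mb Ms gtop t lab pt) (outv Mb Ms gtop t lab pt \<Phi>) (postorder t)"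

definition PS where
  "PS Mb Ms gtop t lab pt = pss (stopg Mb Ms gtop t lab pt) (postorder t)"

lemma US_upd[simp]: "US Mb Ms gtop t (lab([] := x)) = US Mb Ms gtop t lab"
  by (simp add: US_def fun_eq_iff)

lemma PS_upd[simp]: "PS Mb Ms gtop t (lab([] := x)) = PS Mb Ms gtop t lab"
  by (simp add: PS_def fun_eq_iff)

lemma US_Nd:
  "US Mb Ms gtop (Nd ts) lab pt \<Phi> =
    (\<Sum>i<length ts. (\<Prod>j<i. PS (shiftM (lab [j]) Mb) (shiftM (lab [j]) Ms) (shiftM (lab [j]) gtop) (ts ! j) (sl lab j)
                         (child_ptil Mb Ms gtop (Nd ts) lab [] pt j))
       * US (shiftM (lab [i]) Mb) (shiftM (lab [i]) Ms) (shiftM (lab [i]) gtop) (ts ! i) (sl lab i)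
                         (child_ptil Mb Ms gtop (Nd ts) lab [] pt i) (\<lambda>w. \<Phi> (lab [i] # w)))
   + (\<Prod>j<length ts. PS (shiftM (lab [j]) Mb) (shiftM (lab [j]) Ms) (shiftM (lab [j]) gtop) (ts ! j) (sl lab j)
                         (child_ptil Mb Ms gtop (Nd ts) lab [] pt j))
     * (stopg Mb Ms gtop (Nd ts) lab pt [] * outv Mb Ms gtop (Nd ts) lab pt \<Phi> [])"
  unfolding US_def PS_def postorder_Nd
  by (simp add: sst_append pss_append sst_concat pss_concat sst_map pss_map stopg_Cons outv_Cons)

lemma PS_Nd:
  "PS Mb Ms gtop (Nd ts) lab pt =
   (\<Prod>j<length ts. PS (shiftM (lab [j]) Mb) (shiftM (lab [j]) Ms) (shiftM (lab [j]) gtop) (ts ! j) (sl lab j)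
                         (child_ptil Mb Ms gtop (Nd ts) lab [] pt j))
     * (1 - stopg Mb Ms gtop (Nd ts) lab pt [])"
  unfolding PS_def postorder_Nd
  by (simp add: pss_append pss_concat pss_map stopg_Cons)

section \<open>Decomposition of draft trees\<close>

definition rootf :: "('a::finite list \<Rightarrow> 'a \<Rightarrow> real) \<Rightarrow> ('a list \<Rightarrow> nat \<Rightarrow> 'a list) \<Rightarrow> topo list \<Rightarrow> (nat list \<Rightarrow> 'a) \<Rightarrow> real" where
  "rootf Ms gtop ts lab = (if map (\<lambda>i. lab [i]) [0..<length ts - 1] = gtop [] (length ts - 1)
      then res_dist Ms (set (gtop [] (length ts - 1))) [] (lab [length ts - 1]) else 0)"

lemma pdraft_Nd:
  "pdraft Ms gtop (Nd ts) lab = (if ts = [] then 1 else rootf Ms gtop ts lab) *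
     (\<Prod>i<length ts. pdraft (shiftM (lab [i]) Ms) (shiftM (lab [i]) gtop) (ts ! i) (sl lab i))"
proof -
  define f where "f = (\<lambda>(Ms::'a list \<Rightarrow> 'a \<Rightarrow> real) (gtop::'a list \<Rightarrow> nat \<Rightarrow> 'a list) t (lab::nat list \<Rightarrow> 'a) v.
        let ctx = tokpath lab v; m = nch t v in
         if map (\<lambda>i. lab (v @ [i])) [0..<m - 1] = gtop ctx (m - 1)
         then res_dist Ms (set (gtop ctx (m - 1))) ctx (lab (v @ [m - 1]))
         else 0)"
  define NL where "NL = (\<lambda>t. {v \<in> set (postorder t). 0 < nch t v})"
  have pd: "pdraft Ms gtop t lab = (\<Prod>v\<in>NL t. f Ms gtop t lab v)" for Ms gtop t lab
    by (simp add: pdraft_def f_def NL_def)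
  have NLeq: "NL (Nd ts) = (if ts = [] then {} else {[]}) \<union> (\<Union>i\<in>{..<length ts}. (#) i ` NL (ts ! i))"
    by (auto simp: NL_def set_postorder_Nd)
  have fin: "finite (NL t)" for t by (simp add: NL_def)
  have f_Cons: "f Ms gtop (Nd ts) lab (i # p) = f (shiftM (lab [i]) Ms) (shiftM (lab [i]) gtop) (ts ! i) (sl lab i) p" for i p
    by (simp add: f_def Let_def tokpath_Cons res_dist_Cons shiftM_apply sl_apply)
  have f_Nil: "f Ms gtop (Nd ts) lab [] = rootf Ms gtop ts lab"
    by (simp add: f_def rootf_def Let_def)
  have "(\<Prod>v\<in>(\<Union>i\<in>{..<length ts}. (#) i ` NL (ts ! i)). f Ms gtop (Nd ts) lab v)
      = (\<Prod>i<length ts. \<Prod>v\<in>(#) i ` NL (ts ! i). f Ms gtop (Nd ts) lab v)"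
    by (rule prod.UNION_disjoint) (auto simp: fin)
  also have "\<dots> = (\<Prod>i<length ts. pdraft (shiftM (lab [i]) Ms) (shiftM (lab [i]) gtop) (ts ! i) (sl lab i))"
    by (intro prod.cong refl) (simp add: prod.reindex pd f_Cons)
  finally have ch: "(\<Prod>v\<in>(\<Union>i\<in>{..<length ts}. (#) i ` NL (ts ! i)). f Ms gtop (Nd ts) lab v)
      = (\<Prod>i<length ts. pdraft (shiftM (lab [i]) Ms) (shiftM (lab [i]) gtop) (ts ! i) (sl lab i))" .
  show ?thesis
  proof (cases "ts = []")
    case True
    then show ?thesis using ch NLeq by (simp add: pd)
  next
    case False
    have "[] \<notin> (\<Union>i\<in>{..<length ts}. (#) i ` NL (ts ! i))" by auto
    moreover have "finite (\<Union>i\<in>{..<length ts}. (#) i ` NL (ts ! i))" by (simp add: fin)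
    ultimately show ?thesis using ch False by (simp add: pd NLeq f_Nil)
  qed
qed

definition Jn :: "topo list \<Rightarrow> (nat \<Rightarrow> 'a) \<Rightarrow> (nat \<Rightarrow> nat list \<Rightarrow> 'a) \<Rightarrow> nat list \<Rightarrow> 'a" where
  "Jn ts a g = (\<lambda>v. case v of [] \<Rightarrow> undefined
     | i # p \<Rightarrow> if i < length ts then (if p = [] then a i else g i p) else undefined)"

lemma draft_trees_iff: "lab \<in> draft_trees t \<longleftrightarrow> (\<forall>v. v \<notin> set (postorder t) - {[]} \<longrightarrow> lab v = undefined)"
  by (simp add: draft_trees_def PiE_def extensional_def)

lemma draft_trees_Nil: "lab \<in> draft_trees t \<Longrightarrow> lab [] = undefined"
  by (simp add: draft_trees_iff)

lemma finite_draft_trees[simp]: "finite (draft_trees t :: (nat list \<Rightarrow> 'a::finite) set)"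
  by (simp add: draft_trees_def finite_PiE)

lemma sum_draft_trees_Nd:
  fixes F :: "(nat list \<Rightarrow> 'a) \<Rightarrow> real"
  shows "(\<Sum>lab\<in>draft_trees (Nd ts). F lab) =
    (\<Sum>a\<in>PiE {..<length ts} (\<lambda>_. UNIV). \<Sum>g\<in>PiE {..<length ts} (\<lambda>i. draft_trees (ts ! i)). F (Jn ts a g))"
proof -
  let ?A = "PiE {..<length ts} (\<lambda>_. UNIV :: 'a set)"
  let ?G = "PiE {..<length ts} (\<lambda>i. draft_trees (ts ! i) :: (nat list \<Rightarrow> 'a) set)"
  have "(\<Sum>lab\<in>draft_trees (Nd ts). F lab) = (\<Sum>x\<in>?A \<times> ?G. F (Jn ts (fst x) (snd x)))"
  proof (rule sum.reindex_bij_witness[where i = "\<lambda>x. Jn ts (fst x) (snd x)" and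
        j = "\<lambda>lab. (restrict (\<lambda>i. lab [i]) {..<length ts},
                   restrict (\<lambda>i p. if p = [] then undefined else lab (i # p)) {..<length ts})"])
    fix lab :: "nat list \<Rightarrow> 'a" assume lab: "lab \<in> draft_trees (Nd ts)"
    show "Jn ts (fst (restrict (\<lambda>i. lab [i]) {..<length ts},
                   restrict (\<lambda>i p. if p = [] then undefined else lab (i # p)) {..<length ts}))
                (snd (restrict (\<lambda>i. lab [i]) {..<length ts},
                   restrict (\<lambda>i p. if p = [] then undefined else lab (i # p)) {..<length ts})) = lab"
    proof
      fix v show "Jn ts (fst (restrict (\<lambda>i. lab [i]) {..<length ts},
                   restrict (\<lambda>i p. if p = [] then undefined else lab (i # p)) {..<length ts}))
                (snd (restrict (\<lambda>i. lab [i]) {..<length ts},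
                   restrict (\<lambda>i p. if p = [] then undefined else lab (i # p)) {..<length ts})) v = lab v"
        using lab by (cases v) (auto simp: Jn_def draft_trees_iff set_postorder_Nd)
    qed
    show "(restrict (\<lambda>i. lab [i]) {..<length ts},
                   restrict (\<lambda>i p. if p = [] then undefined else lab (i # p)) {..<length ts}) \<in> ?A \<times> ?G"
      using lab by (auto simp: draft_trees_iff set_postorder_Nd)
  next
    fix x assume x: "x \<in> ?A \<times> ?G"
    obtain a g where xa: "x = (a, g)" by force
    with x have a: "a \<in> ?A" and g: "g \<in> ?G" by auto
    have g': "\<And>i. i < length ts \<Longrightarrow> g i \<in> draft_trees (ts ! i)" using g by auto
    show "Jn ts (fst x) (snd x) \<in> draft_trees (Nd ts)"
      unfolding draft_trees_iff
    proof (intro allI impI)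
      fix v assume v: "v \<notin> set (postorder (Nd ts)) - {[]}"
      show "Jn ts (fst x) (snd x) v = undefined"
      proof (cases v)
        case Nil
        then show ?thesis by (simp add: Jn_def)
      next
        case (Cons i p)
        show ?thesis
        proof (cases "i < length ts")
          case True
          with v Cons have "p \<notin> set (postorder (ts ! i))" by (auto simp: set_postorder_Nd)
          then have "p \<noteq> []" by auto
          with g'[OF True] \<open>p \<notin> set (postorder (ts ! i))\<close> have "g i p = undefined"
            by (auto simp: draft_trees_iff)
          with True Cons xa \<open>p \<noteq> []\<close> show ?thesis by (simp add: Jn_def)
        next
          case False
          with Cons show ?thesis by (simp add: Jn_def)
        qed
      qed
    qed
    have r1: "restrict (\<lambda>i. Jn ts a g [i]) {..<length ts} = a"
    proof
      fix i show "restrict (\<lambda>i. Jn ts a g [i]) {..<length ts} i = a i"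
        using a by (auto simp: Jn_def PiE_def extensional_def)
    qed
    have r2: "restrict (\<lambda>i p. if p = [] then undefined else Jn ts a g (i # p)) {..<length ts} = g"
    proof
      fix i show "restrict (\<lambda>i p. if p = [] then undefined else Jn ts a g (i # p)) {..<length ts} i = g i"
      proof (cases "i < length ts")
        case True
        then show ?thesis using draft_trees_Nil[OF g'[OF True]] by (auto simp: Jn_def)
      next
        case False
        then show ?thesis using g by (auto simp: PiE_def extensional_def)
      qed
    qed
    show "(restrict (\<lambda>i. Jn ts (fst x) (snd x) [i]) {..<length ts},
           restrict (\<lambda>i p. if p = [] then undefined else Jn ts (fst x) (snd x) (i # p)) {..<length ts}) = x"
      unfolding xa fst_conv snd_conv using r1 r2 by (simp only:)
  next
    fix lab :: "nat list \<Rightarrow> 'a" assume lab: "lab \<in> draft_trees (Nd ts)"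
    have "Jn ts (restrict (\<lambda>i. lab [i]) {..<length ts})
                (restrict (\<lambda>i p. if p = [] then undefined else lab (i # p)) {..<length ts}) = lab"
    proof
      fix v show "Jn ts (restrict (\<lambda>i. lab [i]) {..<length ts})
                (restrict (\<lambda>i p. if p = [] then undefined else lab (i # p)) {..<length ts}) v = lab v"
        using lab by (cases v) (auto simp: Jn_def draft_trees_iff set_postorder_Nd)
    qed
    then show "F (Jn ts (fst (restrict (\<lambda>i. lab [i]) {..<length ts},
                   restrict (\<lambda>i p. if p = [] then undefined else lab (i # p)) {..<length ts}))
                (snd (restrict (\<lambda>i. lab [i]) {..<length ts},
                   restrict (\<lambda>i p. if p = [] then undefined else lab (i # p)) {..<length ts}))) = F lab"
      by simp
  qed
  also have "\<dots> = (\<Sum>a\<in>?A. \<Sum>g\<in>?G. F (Jn ts a g))"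
    by (simp add: sum.cartesian_product split_def)
  finally show ?thesis .
qed

lemma Jn_root: "a \<in> PiE {..<length ts} (\<lambda>_. UNIV) \<Longrightarrow> Jn ts a g [i] = a i"
  by (auto simp: Jn_def PiE_def extensional_def)

lemma sl_Jn: "i < length ts \<Longrightarrow> g i \<in> draft_trees (ts ! i) \<Longrightarrow> sl (Jn ts a g) i = (g i)([] := a i)"
  by (auto simp: Jn_def sl_def fun_eq_iff draft_trees_Nil)


lemma pos_part_nonneg: "0 \<le> pos_part x"
  by (simp add: pos_part_def)

lemma pos_part_split: "pos_part a = a + pos_part (- a)"
  by (simp add: pos_part_def)

lemma alloc_abs_bounds:
  fixes R B :: "'a::finite \<Rightarrow> real" and um :: 'a
  assumes R: "\<And>x. 0 \<le> R x" and B: "\<And>x. 0 \<le> B x" and pt: "0 \<le> pt" "pt \<le> 1"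
  defines "Z \<equiv> 1 - pt + (\<Sum>x\<in>UNIV. pos_part (pt * B x - R x))"
  defines "pum \<equiv> min 1 (pt * B um / R um)"
  defines "P \<equiv> (\<lambda>u. if u = um then pum else pos_part (pt * B u - R u) * (1 - pum) / Z)"
  shows "\<forall>x. 0 \<le> P x" "(\<Sum>x\<in>UNIV. P x) \<le> 1"
proof -
  have pum0: "0 \<le> pum" unfolding pum_def using R[of um] B[of um] pt by simp
  have pum1: "pum \<le> 1" unfolding pum_def by simp
  define S where "S = (\<Sum>x\<in>UNIV. pos_part (pt * B x - R x))"
  have S0: "0 \<le> S" unfolding S_def by (intro sum_nonneg) (simp add: pos_part_nonneg)
  have SZ: "S \<le> Z" unfolding Z_def S_def using pt by simp
  have Z0: "0 \<le> Z" using S0 SZ by simp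
  show "\<forall>x. 0 \<le> P x" unfolding P_def using pum0 pum1 Z0 by (simp add: pos_part_nonneg)
  have "(\<Sum>x\<in>UNIV. P x) = P um + (\<Sum>x\<in>UNIV - {um}. P x)"
    by (simp add: sum.remove)
  also have "(\<Sum>x\<in>UNIV - {um}. P x) = (\<Sum>x\<in>UNIV - {um}. pos_part (pt * B x - R x)) * ((1 - pum) / Z)"
    unfolding P_def by (simp add: sum_distrib_right sum_divide_distrib)
  also have "\<dots> \<le> S * ((1 - pum) / Z)"
    unfolding S_def using pum1 Z0
    by (intro mult_right_mono sum_mono2) (simp_all add: pos_part_nonneg)
  also have "S * ((1 - pum) / Z) \<le> 1 - pum"
  proof (cases "Z = 0")
    case True
    then show ?thesis using pum1 by simp
  next
    case False
    then have "S / Z \<le> 1" using SZ Z0 by simp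
    then have "(1 - pum) * (S / Z) \<le> (1 - pum) * 1" using pum1 by (intro mult_left_mono) simp_all
    then show ?thesis by (simp add: field_simps)
  qed
  finally show "(\<Sum>x\<in>UNIV. P x) \<le> 1" unfolding P_def by simp
qed

lemma alloc_abs_exp:
  fixes R B :: "'a::finite \<Rightarrow> real"
  assumes R: "\<And>x. 0 \<le> R x" and Rs: "(\<Sum>x\<in>UNIV. R x) = 1"
    and B: "\<And>x. 0 \<le> B x" and Bs: "(\<Sum>x\<in>UNIV. B x) = 1" and pt: "0 \<le> pt" "pt \<le> 1"
  defines "Z \<equiv> 1 - pt + (\<Sum>x\<in>UNIV. pos_part (pt * B x - R x))"
  defines "P \<equiv> (\<lambda>um u. if u = um then min 1 (pt * B um / R um)
                   else pos_part (pt * B u - R u) * (1 - min 1 (pt * B um / R um)) / Z)"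
  shows "(\<Sum>um\<in>UNIV. R um * P um x) = pt * B x"
proof -
  have i: "R u * min 1 (pt * B u / R u) = min (R u) (pt * B u)" for u
  proof (cases "R u = 0")
    case True
    then show ?thesis using B[of u] pt by simp
  next
    case False
    then have "R u > 0" using R[of u] by simp
    then show ?thesis by (simp add: min_def field_simps)
  qed
  have ii: "R u * (1 - min 1 (pt * B u / R u)) = pos_part (R u - pt * B u)" for u
    using i[of u] by (simp add: algebra_simps pos_part_def min_def max_def)
  have iii: "(\<Sum>u\<in>UNIV. pos_part (R u - pt * B u)) = Z"
  proof -
    have "(\<Sum>u\<in>UNIV. pos_part (R u - pt * B u)) = (\<Sum>u\<in>UNIV. (R u - pt * B u) + pos_part (pt * B u - R u))"
      by (intro sum.cong refl) (simp add: pos_part_def max_def)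
    also have "\<dots> = 1 - pt + (\<Sum>x\<in>UNIV. pos_part (pt * B x - R x))"
      by (simp add: sum.distrib sum_subtractf Rs Bs sum_distrib_left[symmetric])
    finally show ?thesis unfolding Z_def .
  qed
  have "(\<Sum>um\<in>UNIV. R um * P um x) = R x * P x x + (\<Sum>um\<in>UNIV - {x}. R um * P um x)"
    by (simp add: sum.remove)
  also have "R x * P x x = min (R x) (pt * B x)" unfolding P_def using i by simp
  also have "(\<Sum>um\<in>UNIV - {x}. R um * P um x) =
      (\<Sum>um\<in>UNIV - {x}. pos_part (R um - pt * B um)) * (pos_part (pt * B x - R x) / Z)"
    unfolding P_def sum_distrib_right
    by (intro sum.cong refl) (auto simp: ii[symmetric])
  also have "(\<Sum>um\<in>UNIV - {x}. pos_part (R um - pt * B um)) = Z - pos_part (R x - pt * B x)"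
    using iii sum.remove[of UNIV x "\<lambda>u. pos_part (R u - pt * B u)"] by simp
  finally have eq: "(\<Sum>um\<in>UNIV. R um * P um x) =
      min (R x) (pt * B x) + (Z - pos_part (R x - pt * B x)) * (pos_part (pt * B x - R x) / Z)" .
  show ?thesis
  proof (cases "pt * B x \<le> R x")
    case True
    then show ?thesis using eq by (simp add: pos_part_def)
  next
    case False
    have "pos_part (pt * B x - R x) \<le> (\<Sum>y\<in>UNIV. pos_part (pt * B y - R y))"
      by (rule member_le_sum) (simp_all add: pos_part_nonneg)
    then have "Z \<ge> pt * B x - R x" using False pt unfolding Z_def by (simp add: pos_part_def)
    then have "Z > 0" using False by simp
    then show ?thesis using eq False by (simp add: pos_part_def)
  qed
qed

lemma root_alg:
  fixes p :: "'a::finite \<Rightarrow> real" and c :: "nat \<Rightarrow> 'a"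
  assumes p0: "\<And>x. 0 \<le> p x" and p1: "(\<Sum>x\<in>UNIV. p x) \<le> 1" and inj: "inj_on c {..<m}"
  defines "cp \<equiv> (\<lambda>j. p (c j) / (1 - (\<Sum>i<j. p (c i))))"
  defines "C \<equiv> c ` {..<m}"
  defines "prs \<equiv> 1 - (1 - (\<Sum>u\<in>UNIV. p u)) / (1 - (\<Sum>i<m. p (c i)))"
  defines "em \<equiv> (\<lambda>y. if y \<in> C then 0 else p y / (\<Sum>u\<in>UNIV - C. p u))"
  shows "\<And>j. j < m \<Longrightarrow> 0 \<le> cp j \<and> cp j \<le> 1"
    and "0 \<le> prs" "prs \<le> 1"
    and "(\<Sum>i<m. (\<Prod>j<i. 1 - cp j) * (cp i * \<phi> (c i))) + (\<Prod>j<m. 1 - cp j) * (prs * (\<Sum>y\<in>UNIV. em y * \<phi> y))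
         = (\<Sum>y\<in>UNIV. p y * \<phi> y)"
    and "(\<Prod>j<m. 1 - cp j) * (1 - prs) = 1 - (\<Sum>y\<in>UNIV. p y)"
proof -
  define s where "s = (\<lambda>j. \<Sum>i<j. p (c i))"
  have sm: "s m = (\<Sum>y\<in>C. p y)" unfolding s_def C_def using inj by (simp add: sum.reindex)
  have sC: "(\<Sum>y\<in>C. p y) \<le> (\<Sum>y\<in>UNIV. p y)" by (rule sum_mono2) (simp_all add: p0)
  have smono: "j \<le> k \<Longrightarrow> s j \<le> s k" for j k
    unfolding s_def by (rule sum_mono2) (auto simp: p0)
  have s0: "0 \<le> s j" for j unfolding s_def by (simp add: sum_nonneg p0)
  have step: "j < m \<Longrightarrow> s j + p (c j) \<le> 1" for j
  proof -
    assume "j < m"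
    then have "s j + p (c j) = s (Suc j)" by (simp add: s_def)
    also have "\<dots> \<le> s m" using \<open>j < m\<close> by (intro smono) simp
    finally show ?thesis using sm sC p1 by simp
  qed
  have cpeq: "cp j = p (c j) / (1 - s j)" for j unfolding cp_def s_def by simp
  show cpb: "0 \<le> cp j \<and> cp j \<le> 1" if "j < m" for j
  proof -
    have "p (c j) \<le> 1 - s j" using step[OF that] by simp
    then show ?thesis unfolding cpeq using p0[of "c j"]
      by (cases "1 - s j = 0") (auto simp: divide_le_eq_1)
  qed
  have prodeq: "i \<le> m \<Longrightarrow> (\<Prod>j<i. 1 - cp j) = 1 - s i" for i
  proof (induction i)
    case 0
    then show ?case by (simp add: s_def)
  next
    case (Suc i)
    then have IH: "(\<Prod>j<i. 1 - cp j) = 1 - s i" by simp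
    have st: "s i + p (c i) \<le> 1" using step Suc.prems by simp
    have "(\<Prod>j<Suc i. 1 - cp j) = (1 - s i) * (1 - p (c i) / (1 - s i))" using IH cpeq by simp
    also have "\<dots> = 1 - s (Suc i)"
    proof (cases "1 - s i = 0")
      case True
      then have "p (c i) = 0" using st p0[of "c i"] by simp
      then show ?thesis using True by (simp add: s_def)
    next
      case False
      then show ?thesis by (simp add: s_def field_simps)
    qed
    finally show ?case .
  qed
  have trm: "(\<Prod>j<i. 1 - cp j) * cp i = p (c i)" if "i < m" for i
  proof -
    have st: "s i + p (c i) \<le> 1" using step that by simp
    have "(\<Prod>j<i. 1 - cp j) * cp i = (1 - s i) * (p (c i) / (1 - s i))" using prodeq[of i] that cpeq by simp
    also have "\<dots> = p (c i)"
    proof (cases "1 - s i = 0")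
      case True
      then show ?thesis using st p0[of "c i"] by simp
    next
      case False
      then show ?thesis by simp
    qed
    finally show ?thesis .
  qed
  define S where "S = 1 - s m"
  define N where "N = (\<Sum>u\<in>UNIV - C. p u)"
  have sumsplit: "(\<Sum>u\<in>UNIV. p u) = s m + N"
    unfolding N_def sm by (simp add: sum.subset_diff[of C UNIV])
  have N0: "0 \<le> N" unfolding N_def by (simp add: sum_nonneg p0)
  have NS: "N \<le> S" unfolding S_def using sumsplit p1 by simp
  have prsS: "prs = 1 - (S - N) / S" unfolding prs_def S_def using sumsplit by (simp add: s_def)
  show "0 \<le> prs" "prs \<le> 1"
    unfolding prsS using N0 NS by (auto simp: divide_le_eq_1 not_le)
  have Sprs: "S * prs = N"
  proof (cases "S = 0")
    case True
    then show ?thesis using N0 NS by simp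
  next
    case False
    then show ?thesis unfolding prsS by (simp add: field_simps)
  qed
  have prodm: "(\<Prod>j<m. 1 - cp j) = S" using prodeq[of m] by (simp add: S_def)
  have emsum: "N * (\<Sum>y\<in>UNIV. em y * \<phi> y) = (\<Sum>y\<in>UNIV - C. p y * \<phi> y)"
  proof (cases "N = 0")
    case True
    have "\<forall>y\<in>UNIV - C. p y = 0" using True unfolding N_def
      by (subst (asm) sum_nonneg_eq_0_iff) (simp_all add: p0)
    then have "(\<Sum>y\<in>UNIV - C. p y * \<phi> y) = 0" by simp
    then show ?thesis using True by simp
  next
    case False
    have "(\<Sum>y\<in>UNIV. em y * \<phi> y) = (\<Sum>y\<in>UNIV - C. em y * \<phi> y)"
      by (rule sum.mono_neutral_right) (auto simp: em_def)
    also have "\<dots> = (\<Sum>y\<in>UNIV - C. p y * \<phi> y / N)"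
      by (intro sum.cong refl) (simp add: em_def N_def)
    finally show ?thesis using False by (simp add: sum_divide_distrib[symmetric])
  qed
  have "(\<Sum>i<m. (\<Prod>j<i. 1 - cp j) * (cp i * \<phi> (c i))) = (\<Sum>i<m. p (c i) * \<phi> (c i))"
    by (intro sum.cong refl) (simp add: trm mult.assoc[symmetric])
  also have "\<dots> = (\<Sum>y\<in>C. p y * \<phi> y)" unfolding C_def using inj by (simp add: sum.reindex)
  finally have first: "(\<Sum>i<m. (\<Prod>j<i. 1 - cp j) * (cp i * \<phi> (c i))) = (\<Sum>y\<in>C. p y * \<phi> y)" .
  have "(\<Prod>j<m. 1 - cp j) * (prs * (\<Sum>y\<in>UNIV. em y * \<phi> y)) = (\<Sum>y\<in>UNIV - C. p y * \<phi> y)"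
    using prodm Sprs emsum by (simp add: mult.assoc[symmetric])
  with first show "(\<Sum>i<m. (\<Prod>j<i. 1 - cp j) * (cp i * \<phi> (c i))) + (\<Prod>j<m. 1 - cp j) * (prs * (\<Sum>y\<in>UNIV. em y * \<phi> y))
         = (\<Sum>y\<in>UNIV. p y * \<phi> y)"
    by (simp add: sum.subset_diff[of C UNIV])
  show "(\<Prod>j<m. 1 - cp j) * (1 - prs) = 1 - (\<Sum>y\<in>UNIV. p y)"
  proof -
    have "(\<Prod>j<m. 1 - cp j) * (1 - prs) = S - S * prs" using prodm by (simp add: algebra_simps)
    then show ?thesis using Sprs sumsplit S_def by linarith
  qed
qed

lemma prod_split3:
  fixes F :: "nat \<Rightarrow> real"
  assumes "i < m"
  shows "(\<Prod>k<m. F k) = (\<Prod>k<i. F k) * F i * (\<Prod>k\<in>{Suc i..<m}. F k)"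
proof -
  have "(\<Prod>k<m. F k) = (\<Prod>k\<in>{0..<i}. F k) * (\<Prod>k\<in>{i..<m}. F k)"
    using assms by (simp add: prod.atLeastLessThan_concat lessThan_atLeast0)
  also have "(\<Prod>k\<in>{i..<m}. F k) = F i * (\<Prod>k\<in>{Suc i..<m}. F k)"
    using assms by (simp add: prod.atLeast_Suc_lessThan)
  finally show ?thesis by (simp add: lessThan_atLeast0 mult.assoc)
qed

lemma indep:
  fixes w P U :: "nat \<Rightarrow> 'b \<Rightarrow> real" and G :: "nat \<Rightarrow> 'b set"
  assumes fin: "\<And>i. finite (G i)"
  shows "(\<Sum>g\<in>PiE {..<m} G. (\<Prod>i<m. w i (g i)) *
            ((\<Sum>i<m. (\<Prod>j<i. P j (g j)) * U i (g i)) + (\<Prod>j<m. P j (g j)) * K))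
   = (\<Sum>i<m. (\<Prod>j<i. \<Sum>x\<in>G j. w j x * P j x) * (\<Sum>x\<in>G i. w i x * U i x)
                * (\<Prod>j\<in>{Suc i..<m}. \<Sum>x\<in>G j. w j x))
     + (\<Prod>j<m. \<Sum>x\<in>G j. w j x * P j x) * K"
proof -
  define f where "f = (\<lambda>i k x. w k x * (if k < i then P k x else if k = i then U k x else 1))"
  have t1: "(\<Prod>k<m. w k (g k)) * ((\<Prod>j<i. P j (g j)) * U i (g i)) = (\<Prod>k<m. f i k (g k))"
    if "i < m" for g i
  proof -
    have "(\<Prod>k<m. f i k (g k)) = (\<Prod>k<m. w k (g k)) * (\<Prod>k<m. (if k < i then P k (g k) else if k = i then U k (g k) else 1))"
      unfolding f_def by (simp add: prod.distrib)
    also have "(\<Prod>k<m. (if k < i then P k (g k) else if k = i then U k (g k) else 1)) = (\<Prod>j<i. P j (g j)) * U i (g i)"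
      by (subst prod_split3[OF that]) simp
    finally show ?thesis by simp
  qed
  have t2: "(\<Prod>k<m. \<Sum>x\<in>G k. f i k x) = (\<Prod>j<i. \<Sum>x\<in>G j. w j x * P j x) * (\<Sum>x\<in>G i. w i x * U i x)
                * (\<Prod>j\<in>{Suc i..<m}. \<Sum>x\<in>G j. w j x)" if "i < m" for i
    by (subst prod_split3[OF that]) (simp add: f_def)
  have t3: "(\<Prod>k<m. w k (g k)) * (\<Prod>j<m. P j (g j)) = (\<Prod>k<m. w k (g k) * P k (g k))" for g
    by (simp add: prod.distrib)
  have "(\<Sum>g\<in>PiE {..<m} G. (\<Prod>i<m. w i (g i)) *
            ((\<Sum>i<m. (\<Prod>j<i. P j (g j)) * U i (g i)) + (\<Prod>j<m. P j (g j)) * K))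
     = (\<Sum>g\<in>PiE {..<m} G. (\<Sum>i<m. \<Prod>k<m. f i k (g k)) + (\<Prod>k<m. w k (g k) * P k (g k)) * K)"
    by (intro sum.cong refl) (simp add: distrib_left sum_distrib_left t1 t3[symmetric] mult.assoc)
  also have "\<dots> = (\<Sum>i<m. \<Sum>g\<in>PiE {..<m} G. \<Prod>k<m. f i k (g k)) + (\<Sum>g\<in>PiE {..<m} G. \<Prod>k<m. w k (g k) * P k (g k)) * K"
    by (simp add: sum.distrib sum_distrib_right sum.swap[of _ "PiE {..<m} G"])
  also have "\<dots> = (\<Sum>i<m. \<Prod>k<m. \<Sum>x\<in>G k. f i k x) + (\<Prod>k<m. \<Sum>x\<in>G k. w k x * P k x) * K"
    by (simp add: prod_sum_PiE fin)
  also have "\<dots> = (\<Sum>i<m. (\<Prod>j<i. \<Sum>x\<in>G j. w j x * P j x) * (\<Sum>x\<in>G i. w i x * U i x)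
                * (\<Prod>j\<in>{Suc i..<m}. \<Sum>x\<in>G j. w j x)) + (\<Prod>k<m. \<Sum>x\<in>G k. w k x * P k x) * K"
    by (intro arg_cong2[where f="(+)"] sum.cong refl) (simp_all add: t2)
  finally show ?thesis .
qed


definition rl :: "(nat \<Rightarrow> 'a) \<Rightarrow> nat list \<Rightarrow> 'a" where
  "rl a = (\<lambda>v. a (hd v))"

lemma rl_single[simp]: "rl a [i] = a i"
  by (simp add: rl_def)

lemma alloc_root: "(\<And>i. lab [i] = lab' [i]) \<Longrightarrow> alloc Mb Ms gtop t lab [] = alloc Mb Ms gtop t lab' []"
  unfolding alloc_def Let_def by (simp cong: if_cong)

lemma child_ptil_root: "(\<And>i. lab [i] = lab' [i]) \<Longrightarrow>
    child_ptil Mb Ms gtop t lab [] = child_ptil Mb Ms gtop t lab' []"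
  unfolding child_ptil_def Let_def by (simp add: alloc_root[of lab lab'] fun_eq_iff)

lemma stopg_root: "(\<And>i. lab [i] = lab' [i]) \<Longrightarrow>
    stopg Mb Ms gtop t lab pt [] = stopg Mb Ms gtop t lab' pt []"
  unfolding stopg_def presg_def Let_def by (simp add: alloc_root[of lab lab'] cong: if_cong)

lemma outv_root: "(\<And>i. lab [i] = lab' [i]) \<Longrightarrow>
    outv Mb Ms gtop t lab pt \<Phi> [] = outv Mb Ms gtop t lab' pt \<Phi> []"
  unfolding outv_def emitg_def Let_def by (simp add: alloc_root[of lab lab'] cong: if_cong)

lemma rootf_root: "(\<And>i. lab [i] = lab' [i]) \<Longrightarrow> rootf Ms gtop ts lab = rootf Ms gtop ts lab'"
  unfolding rootf_def by simp

definition gl :: "('a::finite list \<Rightarrow> nat \<Rightarrow> 'a list) \<Rightarrow> bool" where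
  "gl gtop = (\<forall>ctx k. k < card (UNIV :: 'a set) \<longrightarrow> length (gtop ctx k) = k \<and> distinct (gtop ctx k))"

definition harm :: "('a list \<Rightarrow> 'a \<Rightarrow> real) \<Rightarrow> nat \<Rightarrow> ('a list \<Rightarrow> real) \<Rightarrow> bool" where
  "harm Mb n \<Phi> = (\<forall>w. length w \<le> n \<longrightarrow> \<Phi> w = (\<Sum>y\<in>UNIV. Mb w y * \<Phi> (w @ [y])))"

definition good :: "('a::finite list \<Rightarrow> 'a \<Rightarrow> real) \<Rightarrow> ('a list \<Rightarrow> 'a \<Rightarrow> real) \<Rightarrow> ('a list \<Rightarrow> nat \<Rightarrow> 'a list) \<Rightarrow> topo \<Rightarrow> bool" where
  "good Mb Ms gtop t = ((\<forall>ctx x. 0 \<le> Mb ctx x) \<and> (\<forall>ctx. (\<Sum>x\<in>UNIV. Mb ctx x) = 1) \<and>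
     (\<forall>ctx x. 0 \<le> Ms ctx x) \<and> gl gtop \<and>
     (\<forall>v\<in>set (postorder t). nch t v \<le> card (UNIV :: 'a set)) \<and>
     (\<forall>ctx. \<forall>v\<in>set (postorder t). 0 < nch t v \<longrightarrow>
        0 < (\<Sum>y\<in>UNIV - set (gtop ctx (nch t v - 1)). Ms ctx y)))"

definition concl :: "('a::finite list \<Rightarrow> 'a \<Rightarrow> real) \<Rightarrow> ('a list \<Rightarrow> 'a \<Rightarrow> real) \<Rightarrow> ('a list \<Rightarrow> nat \<Rightarrow> 'a list) \<Rightarrow> topo \<Rightarrow> real \<Rightarrow> bool" where
  "concl Mb Ms gtop t pt =
    ((\<Sum>lab\<in>draft_trees t. pdraft Ms gtop t lab) = 1 \<and>
     (\<Sum>lab\<in>draft_trees t. pdraft Ms gtop t lab * PS Mb Ms gtop t lab pt) = 1 - pt \<and>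
     (\<forall>\<Phi>. harm Mb (height t) \<Phi> \<longrightarrow>
        (\<Sum>lab\<in>draft_trees t. pdraft Ms gtop t lab * US Mb Ms gtop t lab pt \<Phi>) = pt * \<Phi> []))"

lemma good_child:
  assumes "good Mb Ms gtop (Nd ts)" "i < length ts"
  shows "good (shiftM a Mb) (shiftM a Ms) (shiftM a gtop) (ts ! i)"
proof -
  have pos: "\<And>v. v \<in> set (postorder (ts ! i)) \<Longrightarrow> i # v \<in> set (postorder (Nd ts))"
    using assms(2) by (auto simp: set_postorder_Nd)
  show ?thesis
    unfolding good_def gl_def
  proof (intro conjI allI ballI impI)
    fix v assume v: "v \<in> set (postorder (ts ! i))"
    have "nch (Nd ts) (i # v) \<le> card (UNIV :: 'a set)" using assms(1) pos[OF v] unfolding good_def by blast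
    then show "nch (ts ! i) v \<le> card (UNIV :: 'a set)" by simp
  next
    fix ctx v assume v: "v \<in> set (postorder (ts ! i))" and n: "0 < nch (ts ! i) v"
    have "\<forall>ctx. \<forall>v\<in>set (postorder (Nd ts)). 0 < nch (Nd ts) v \<longrightarrow>
        0 < (\<Sum>y\<in>UNIV - set (gtop ctx (nch (Nd ts) v - 1)). Ms ctx y)"
      using assms(1) unfolding good_def by blast
    then have "0 < (\<Sum>y\<in>UNIV - set (gtop (a # ctx) (nch (Nd ts) (i # v) - 1)). Ms (a # ctx) y)"
      using pos[OF v] n by (metis nch_Cons)
    then show "0 < (\<Sum>y\<in>UNIV - set (shiftM a gtop ctx (nch (ts ! i) v - 1)). shiftM a Ms ctx y)"
      by (simp add: shiftM_apply)
  qed (use assms(1) in \<open>auto simp: good_def gl_def shiftM_apply\<close>)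
qed

lemma harm_child:
  assumes "harm Mb (height (Nd ts)) \<Phi>" "i < length ts"
  shows "harm (shiftM a Mb) (height (ts ! i)) (\<lambda>w. \<Phi> (a # w))"
  unfolding harm_def
proof (intro allI impI)
  fix w :: "'a list" assume "length w \<le> height (ts ! i)"
  then have "length (a # w) \<le> height (Nd ts)" using height_nth[OF assms(2)] by simp
  then show "\<Phi> (a # w) = (\<Sum>y\<in>UNIV. shiftM a Mb w y * \<Phi> (a # w @ [y]))"
    using assms(1) unfolding harm_def by (simp add: shiftM_apply)
qed

lemma leaf_case:
  fixes Mb Ms :: "'a::finite list \<Rightarrow> 'a \<Rightarrow> real"
  assumes "0 \<le> pt" "pt \<le> 1"
  shows "concl Mb Ms gtop (Nd []) pt"
proof -
  have po: "set (postorder (Nd [])) = {[]}" by (simp add: postorder_Nd)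
  have DT: "draft_trees (Nd []) = {(\<lambda>_. undefined) :: nat list \<Rightarrow> 'a}"
    by (simp add: draft_trees_def po)
  have pd: "pdraft Ms gtop (Nd []) lab = 1" for lab by (subst pdraft_Nd) simp
  have st: "stopg Mb Ms gtop (Nd []) lab pt [] = pt" for lab
    using assms by (simp add: stopg_def unif_lt_def)
  have PS: "PS Mb Ms gtop (Nd []) lab pt = 1 - pt" for lab by (subst PS_Nd) (simp add: st)
  have US: "US Mb Ms gtop (Nd []) lab pt \<Phi> = pt * (\<Sum>y\<in>UNIV. Mb [] y * \<Phi> [y])" for lab \<Phi>
    by (subst US_Nd) (simp add: st outv_def emitg_def)
  show ?thesis unfolding concl_def
  proof (intro conjI allI impI)
    show "(\<Sum>lab\<in>draft_trees (Nd []). pdraft Ms gtop (Nd []) lab) = 1" by (simp add: DT pd)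
    show "(\<Sum>lab\<in>draft_trees (Nd []). pdraft Ms gtop (Nd []) lab * PS Mb Ms gtop (Nd []) lab pt) = 1 - pt"
      by (simp add: DT pd PS)
    fix \<Phi> assume h: "harm Mb (height (Nd [])) \<Phi>"
    have "\<Phi> [] = (\<Sum>y\<in>UNIV. Mb [] y * \<Phi> ([] @ [y]))"
      using h unfolding harm_def by (drule_tac x="[]" in spec) simp
    then show "(\<Sum>lab\<in>draft_trees (Nd []). pdraft Ms gtop (Nd []) lab * US Mb Ms gtop (Nd []) lab pt \<Phi>) = pt * \<Phi> []"
      by (simp add: DT pd US)
  qed
qed

lemma step:
  fixes Mb Ms :: "'a::finite list \<Rightarrow> 'a \<Rightarrow> real" and gtop :: "'a list \<Rightarrow> nat \<Rightarrow> 'a list"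
  assumes ne: "ts \<noteq> []" and gd: "good Mb Ms gtop (Nd ts)" and pt: "0 \<le> pt" "pt \<le> 1"
    and IH: "\<And>i (Mb' :: 'a list \<Rightarrow> 'a \<Rightarrow> real) Ms' gtop' pt'. i < length ts \<Longrightarrow> good Mb' Ms' gtop' (ts ! i) \<Longrightarrow>
               0 \<le> pt' \<Longrightarrow> pt' \<le> 1 \<Longrightarrow> concl Mb' Ms' gtop' (ts ! i) pt'"
  shows "concl Mb Ms gtop (Nd ts) pt"
proof -
  have m0: "0 < length ts" using ne by simp
  have Mb0: "\<And>ctx x. 0 \<le> Mb ctx x" and Mb1: "\<And>ctx. (\<Sum>x\<in>UNIV. Mb ctx x) = 1"
    and Ms0: "\<And>ctx x. 0 \<le> Ms ctx x" and glg: "gl gtop"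
    and fan: "\<forall>v\<in>set (postorder (Nd ts)). nch (Nd ts) v \<le> card (UNIV :: 'a set)"
    and res: "\<forall>ctx. \<forall>v\<in>set (postorder (Nd ts)). 0 < nch (Nd ts) v \<longrightarrow>
        0 < (\<Sum>y\<in>UNIV - set (gtop ctx (nch (Nd ts) v - 1)). Ms ctx y)"
    using gd unfolding good_def by blast+
  define gt where "gt = gtop [] (length ts - 1)"
  have mcard: "length ts \<le> card (UNIV :: 'a set)" using bspec[OF fan Nil_in_postorder[of "Nd ts"]] by simp
  have gtlen: "length gt = length ts - 1" and gtd: "distinct gt"
  proof -
    have "length ts - 1 < card (UNIV :: 'a set)" using mcard m0 by linarith
    then show "length gt = length ts - 1" "distinct gt" using glg unfolding gl_def gt_def by blast+
  qed
  define H where "H = set gt"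
  define R where "R = res_dist Ms H []"
  have den: "0 < (\<Sum>y\<in>UNIV - H. Ms [] y)"
    using bspec[OF spec[OF res, of "[]"] Nil_in_postorder[of "Nd ts"]] m0 by (simp add: H_def gt_def)
  have R0: "0 \<le> R x" for x using den by (simp add: R_def res_dist_def Ms0)
  have R1: "(\<Sum>x\<in>UNIV. R x) = 1"
  proof -
    have "(\<Sum>x\<in>UNIV. R x) = (\<Sum>x\<in>UNIV - H. R x)"
      by (rule sum.mono_neutral_right) (auto simp: R_def res_dist_def)
    also have "\<dots> = (\<Sum>x\<in>UNIV - H. Ms [] x / (\<Sum>y\<in>UNIV - H. Ms [] y))"
      by (intro sum.cong refl) (simp add: R_def res_dist_def)
    also have "\<dots> = 1" using den by (simp add: sum_divide_distrib[symmetric])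
    finally show ?thesis .
  qed
  have RH: "u \<notin> H" if "R u \<noteq> 0" for u using that by (auto simp: R_def res_dist_def)

  define A where "A = PiE {..<length ts} (\<lambda>_. UNIV :: 'a set)"
  define G where "G = PiE {..<length ts} (\<lambda>i. draft_trees (ts ! i) :: (nat list \<Rightarrow> 'a) set)"
  define rf where "rf a = rootf Ms gtop ts (rl a)" for a
  define pa where "pa a = alloc Mb Ms gtop (Nd ts) (rl a) [] pt" for a
  define cpa where "cpa a j = child_ptil Mb Ms gtop (Nd ts) (rl a) [] pt j" for a j
  define sa where "sa a = stopg Mb Ms gtop (Nd ts) (rl a) pt []" for a
  define oa where "oa a \<Phi> = outv Mb Ms gtop (Nd ts) (rl a) pt \<Phi> []" for a \<Phi>
  define wt where "wt a i x = pdraft (shiftM (a i) Ms) (shiftM (a i) gtop) (ts ! i) x" for a i x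
  define P where "P a i x = PS (shiftM (a i) Mb) (shiftM (a i) Ms) (shiftM (a i) gtop) (ts ! i) x (cpa a i)" for a i x
  define U where "U a \<Phi> i x = US (shiftM (a i) Mb) (shiftM (a i) Ms) (shiftM (a i) gtop) (ts ! i) x (cpa a i)
                       (\<lambda>w. \<Phi> (a i # w))" for a \<Phi> i x

  have finG: "finite (draft_trees (ts ! i) :: (nat list \<Rightarrow> 'a) set)" for i by simp

  have Jr: "Jn ts a g [i] = rl a [i]" if "a \<in> A" for a g i
    using Jn_root[of a ts g i] that by (simp add: A_def)
  have Jsl: "sl (Jn ts a g) i = (g i)([] := a i)" if "g \<in> G" "i < length ts" for a g i
    using sl_Jn[of i ts g a] that by (auto simp: G_def)
  have Jpd: "pdraft Ms gtop (Nd ts) (Jn ts a g) = rf a * (\<Prod>i<length ts. wt a i (g i))"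
    if "a \<in> A" "g \<in> G" for a g
  proof -
    have "pdraft Ms gtop (Nd ts) (Jn ts a g) = rootf Ms gtop ts (Jn ts a g) *
       (\<Prod>i<length ts. pdraft (shiftM (Jn ts a g [i]) Ms) (shiftM (Jn ts a g [i]) gtop) (ts ! i) (sl (Jn ts a g) i))"
      by (subst pdraft_Nd) (simp add: ne)
    also have "rootf Ms gtop ts (Jn ts a g) = rf a"
      unfolding rf_def by (rule rootf_root) (simp add: Jr[OF that(1)])
    also have "(\<Prod>i<length ts. pdraft (shiftM (Jn ts a g [i]) Ms) (shiftM (Jn ts a g [i]) gtop) (ts ! i) (sl (Jn ts a g) i))
        = (\<Prod>i<length ts. wt a i (g i))"
      by (intro prod.cong refl) (simp add: Jr[OF that(1)] Jsl[OF that(2)] wt_def)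
    finally show ?thesis .
  qed
  have Jcp: "child_ptil Mb Ms gtop (Nd ts) (Jn ts a g) [] pt = cpa a" if "a \<in> A" for a g
    unfolding cpa_def using child_ptil_root[of "Jn ts a g" "rl a"] Jr[OF that] by (simp add: fun_eq_iff)
  have Jsa: "stopg Mb Ms gtop (Nd ts) (Jn ts a g) pt [] = sa a" if "a \<in> A" for a g
    unfolding sa_def by (rule stopg_root) (simp add: Jr[OF that])
  have Joa: "outv Mb Ms gtop (Nd ts) (Jn ts a g) pt \<Phi> [] = oa a \<Phi>" if "a \<in> A" for a g \<Phi>
    unfolding oa_def by (rule outv_root) (simp add: Jr[OF that])
  have JUS: "US Mb Ms gtop (Nd ts) (Jn ts a g) pt \<Phi> =
      (\<Sum>i<length ts. (\<Prod>j<i. P a j (g j)) * U a \<Phi> i (g i)) + (\<Prod>j<length ts. P a j (g j)) * (sa a * oa a \<Phi>)"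
    if "a \<in> A" "g \<in> G" for a g \<Phi>
  proof -
    have e1: "(\<Prod>j<i. PS (shiftM (Jn ts a g [j]) Mb) (shiftM (Jn ts a g [j]) Ms) (shiftM (Jn ts a g [j]) gtop) (ts ! j)
                (sl (Jn ts a g) j) (child_ptil Mb Ms gtop (Nd ts) (Jn ts a g) [] pt j)) = (\<Prod>j<i. P a j (g j))"
      if "i \<le> length ts" for i
      using that by (intro prod.cong refl) (simp add: Jr[OF \<open>a \<in> A\<close>] Jsl[OF \<open>g \<in> G\<close>] Jcp[OF \<open>a \<in> A\<close>] P_def)
    show ?thesis
      apply (subst US_Nd)
      apply (simp add: e1 Jsa[OF that(1)] Joa[OF that(1)])
      apply (intro sum.cong refl arg_cong2[where f="(*)"])
       apply (simp add: e1)
      apply (simp add: Jr[OF that(1)] Jsl[OF that(2)] Jcp[OF that(1)] U_def)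
      done
  qed
  have JPS: "PS Mb Ms gtop (Nd ts) (Jn ts a g) pt = (\<Prod>j<length ts. P a j (g j)) * (1 - sa a)"
    if "a \<in> A" "g \<in> G" for a g
  proof -
    have e: "(\<Prod>j<length ts. PS (shiftM (Jn ts a g [j]) Mb) (shiftM (Jn ts a g [j]) Ms) (shiftM (Jn ts a g [j]) gtop) (ts ! j)
                (sl (Jn ts a g) j) (child_ptil Mb Ms gtop (Nd ts) (Jn ts a g) [] pt j)) = (\<Prod>j<length ts. P a j (g j))"
      by (intro prod.cong refl) (simp add: Jr[OF that(1)] Jsl[OF that(2)] Jcp[OF that(1)] P_def)
    show ?thesis by (subst PS_Nd) (simp only: e Jsa[OF that(1)])
  qed
  have IHc: "concl (shiftM b Mb) (shiftM b Ms) (shiftM b gtop) (ts ! i) q"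
    if "i < length ts" "0 \<le> q" "q \<le> 1" for i b q
    using IH[OF that(1) good_child[OF gd that(1)] that(2,3)] .
  have W1: "(\<Sum>x\<in>draft_trees (ts ! i). wt a i x) = 1" if "i < length ts" for a i
    using IHc[OF that, of 0 "a i"] unfolding concl_def wt_def by simp

  define ext where "ext u = (\<lambda>i. if i < length ts then (if i < length ts - 1 then gt ! i else u) else undefined)" for u :: 'a
  have extA: "ext u \<in> A" for u by (auto simp: A_def ext_def PiE_def extensional_def)
  have ext_last: "ext u (length ts - 1) = u" for u using m0 by (simp add: ext_def)
  have map_ext: "map (\<lambda>i. rl (ext u) [i]) [0..<length ts - 1] = gt" for u
    by (rule nth_equalityI) (auto simp: gtlen ext_def)
  have rf_ext: "rf (ext u) = R u" for u
    unfolding rf_def rootf_def using map_ext[of u] ext_last[of u] by (simp add: R_def H_def gt_def)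
  have rf_zero: "rf a = 0" if "a \<in> A" "a \<notin> range ext" for a
  proof (rule ccontr)
    assume "rf a \<noteq> 0"
    then have mp: "map (\<lambda>i. a i) [0..<length ts - 1] = gt" unfolding rf_def rootf_def gt_def
      by (auto split: if_splits)
    have "a = ext (a (length ts - 1))"
    proof
      fix i show "a i = ext (a (length ts - 1)) i"
      proof (cases "i < length ts - 1")
        case True
        then have "map (\<lambda>i. a i) [0..<length ts - 1] ! i = gt ! i" using mp by simp
        then show ?thesis using True by (auto simp: ext_def)
      next
        case False
        show ?thesis
        proof (cases "i < length ts")
          case True
          then have "i = length ts - 1" using False by linarith
          then show ?thesis using True by (simp add: ext_def)
        next
          case F2: False
          then show ?thesis using that(1) by (auto simp: ext_def A_def PiE_def extensional_def)
        qed
      qed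
    qed
    then show False using that(2) by blast
  qed
  have inj_ext: "inj ext" by (metis injI ext_last)
  have finA: "finite A" by (simp add: A_def finite_PiE)
  have red: "(\<Sum>a\<in>A. rf a * F a) = (\<Sum>u\<in>UNIV. R u * F (ext u))" for F
  proof -
    have "(\<Sum>a\<in>A. rf a * F a) = (\<Sum>a\<in>range ext. rf a * F a)"
      by (rule sum.mono_neutral_right) (auto simp: finA extA rf_zero)
    also have "\<dots> = (\<Sum>u\<in>UNIV. rf (ext u) * F (ext u))"
      by (simp add: sum.reindex inj_ext)
    finally show ?thesis by (simp add: rf_ext)
  qed

  define Z where "Z = 1 - pt + (\<Sum>x\<in>UNIV. pos_part (pt * Mb [] x - R x))"
  have pa_ext: "pa (ext u) = (\<lambda>x. if x = u then min 1 (pt * Mb [] u / R u)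
        else pos_part (pt * Mb [] x - R x) * (1 - min 1 (pt * Mb [] u / R u)) / Z)" for u
    unfolding pa_def alloc_def Let_def using ext_last[of u]
    by (simp add: Z_def R_def H_def gt_def fun_eq_iff cong: if_cong)
  have pa_b0: "0 \<le> pa (ext u) x" and pa_b1: "(\<Sum>x\<in>UNIV. pa (ext u) x) \<le> 1" for u x
    using alloc_abs_bounds[of R "Mb []" pt u] R0 Mb0 pt unfolding pa_ext Z_def by auto
  have pa_exp: "(\<Sum>u\<in>UNIV. R u * pa (ext u) x) = pt * Mb [] x" for x
    using alloc_abs_exp[of R "Mb []" pt x] R0 R1 Mb0 Mb1 pt unfolding pa_ext Z_def by simp

  have inj_a: "inj_on (ext u) {..<length ts}" if "R u \<noteq> 0" for u
  proof (rule inj_onI)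
    fix i j assume i: "i \<in> {..<length ts}" and j: "j \<in> {..<length ts}" and e: "ext u i = ext u j"
    have uH: "u \<notin> set gt" using RH[OF that] by (simp add: H_def)
    show "i = j"
    proof (cases "i < length ts - 1"; cases "j < length ts - 1")
      assume "i < length ts - 1" "j < length ts - 1"
      then show ?thesis using e i j gtd gtlen by (simp add: ext_def nth_eq_iff_index_eq)
    next
      assume "i < length ts - 1" "\<not> j < length ts - 1"
      then show ?thesis using e i j uH gtlen by (auto simp: ext_def)
    next
      assume "\<not> i < length ts - 1" "j < length ts - 1"
      then show ?thesis using e i j uH gtlen by (auto simp: ext_def)
    next
      assume "\<not> i < length ts - 1" "\<not> j < length ts - 1"
      then show ?thesis using i j by simp
    qed
  qed
  have cpa_eq: "cpa a = (\<lambda>j. pa a (a j) / (1 - (\<Sum>i<j. pa a (a i))))" for a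
    by (simp add: cpa_def child_ptil_def pa_def fun_eq_iff Let_def)
  have sa_eq: "sa a = unif_lt (1 - (1 - (\<Sum>u\<in>UNIV. pa a u)) / (1 - (\<Sum>i<length ts. pa a (a i))))" for a
    using ne by (simp add: sa_def stopg_def presg_def pa_def Let_def)
  have oa_eq: "oa a \<Phi> = (\<Sum>y\<in>UNIV. (if y \<in> a ` {..<length ts} then 0
        else pa a y / (\<Sum>u\<in>UNIV - a ` {..<length ts}. pa a u)) * \<Phi> [y])" for a \<Phi>
    using ne by (simp add: oa_def outv_def emitg_def pa_def Let_def cong: if_cong)
  have root1: "0 \<le> cpa (ext u) j \<and> cpa (ext u) j \<le> 1" if "R u \<noteq> 0" "j < length ts" for u j
    using root_alg(1)[of "pa (ext u)" "ext u" "length ts" j, OF pa_b0 pa_b1 inj_a[OF that(1)] that(2)]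
    by (simp add: cpa_eq)
  have sa_ext: "sa (ext u) = 1 - (1 - (\<Sum>y\<in>UNIV. pa (ext u) y)) / (1 - (\<Sum>i<length ts. pa (ext u) (ext u i)))"
    if "R u \<noteq> 0" for u
    using root_alg(2,3)[of "pa (ext u)" "ext u" "length ts", OF pa_b0 pa_b1 inj_a[OF that(1)]]
    by (simp add: sa_eq unif_lt_def)
  have root3: "(\<Sum>i<length ts. (\<Prod>j<i. 1 - cpa (ext u) j) * (cpa (ext u) i * \<Phi> [ext u i]))
      + (\<Prod>j<length ts. 1 - cpa (ext u) j) * (sa (ext u) * oa (ext u) \<Phi>)
      = (\<Sum>y\<in>UNIV. pa (ext u) y * \<Phi> [y])" if "R u \<noteq> 0" for u \<Phi>
    using root_alg(4)[of "pa (ext u)" "ext u" "length ts" "\<lambda>y. \<Phi> [y]", OF pa_b0 pa_b1 inj_a[OF that(1)]]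
    by (simp add: cpa_eq sa_ext[OF that] oa_eq)
  have root4: "(\<Prod>j<length ts. 1 - cpa (ext u) j) * (1 - sa (ext u)) = 1 - (\<Sum>y\<in>UNIV. pa (ext u) y)"
    if "R u \<noteq> 0" for u
    using root_alg(5)[of "pa (ext u)" "ext u" "length ts", OF pa_b0 pa_b1 inj_a[OF that(1)]]
    by (simp add: cpa_eq sa_ext[OF that])
  have EP: "(\<Sum>x\<in>draft_trees (ts ! i). wt (ext u) i x * P (ext u) i x) = 1 - cpa (ext u) i"
    if "R u \<noteq> 0" "i < length ts" for u i
    using IHc[OF that(2), of "cpa (ext u) i" "ext u i"] root1[OF that] unfolding concl_def wt_def P_def by simp
  have EU: "(\<Sum>x\<in>draft_trees (ts ! i). wt (ext u) i x * U (ext u) \<Phi> i x) = cpa (ext u) i * \<Phi> [ext u i]"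
    if "R u \<noteq> 0" "i < length ts" "harm Mb (height (Nd ts)) \<Phi>" for u i \<Phi>
    using IHc[OF that(2), of "cpa (ext u) i" "ext u i"] root1[OF that(1,2)] harm_child[OF that(3,2), of "ext u i"]
    unfolding concl_def wt_def U_def by simp
  have PiEsum: "(\<Sum>g\<in>G. \<Prod>i<length ts. f i (g i)) = (\<Prod>i<length ts. \<Sum>x\<in>draft_trees (ts ! i). f i x)"
    for f :: "nat \<Rightarrow> (nat list \<Rightarrow> 'a) \<Rightarrow> real"
    unfolding G_def by (rule prod_sum_PiE[symmetric]) simp_all
  have pt_sum: "(\<Sum>u\<in>UNIV. R u * (\<Sum>y\<in>UNIV. pa (ext u) y * \<phi> y)) = pt * (\<Sum>y\<in>UNIV. Mb [] y * \<phi> y)" for \<phi>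
  proof -
    have "(\<Sum>u\<in>UNIV. R u * (\<Sum>y\<in>UNIV. pa (ext u) y * \<phi> y)) = (\<Sum>u\<in>UNIV. \<Sum>y\<in>UNIV. R u * pa (ext u) y * \<phi> y)"
      by (simp add: sum_distrib_left mult.assoc)
    also have "\<dots> = (\<Sum>y\<in>UNIV. \<Sum>u\<in>UNIV. R u * pa (ext u) y * \<phi> y)"
      by (rule sum.swap)
    also have "\<dots> = (\<Sum>y\<in>UNIV. (\<Sum>u\<in>UNIV. R u * pa (ext u) y) * \<phi> y)"
      by (simp add: sum_distrib_right)
    also have "\<dots> = (\<Sum>y\<in>UNIV. pt * Mb [] y * \<phi> y)"
      by (simp add: pa_exp)
    finally show ?thesis by (simp add: sum_distrib_left mult.assoc)
  qed

  show ?thesis unfolding concl_def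
  proof (intro conjI allI impI)
    have "(\<Sum>lab\<in>draft_trees (Nd ts). pdraft Ms gtop (Nd ts) lab) = (\<Sum>a\<in>A. \<Sum>g\<in>G. pdraft Ms gtop (Nd ts) (Jn ts a g))"
      by (simp add: sum_draft_trees_Nd A_def G_def)
    also have "\<dots> = (\<Sum>a\<in>A. rf a * (\<Prod>i<length ts. \<Sum>x\<in>draft_trees (ts ! i). wt a i x))"
      by (intro sum.cong refl) (simp add: Jpd sum_distrib_left[symmetric] PiEsum)
    also have "\<dots> = (\<Sum>a\<in>A. rf a * 1)"
      by (intro sum.cong refl) (simp add: W1)
    also have "\<dots> = 1" using red[of "\<lambda>_. 1"] R1 by simp
    finally show "(\<Sum>lab\<in>draft_trees (Nd ts). pdraft Ms gtop (Nd ts) lab) = 1" .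
  next
    have "(\<Sum>lab\<in>draft_trees (Nd ts). pdraft Ms gtop (Nd ts) lab * PS Mb Ms gtop (Nd ts) lab pt)
        = (\<Sum>a\<in>A. \<Sum>g\<in>G. pdraft Ms gtop (Nd ts) (Jn ts a g) * PS Mb Ms gtop (Nd ts) (Jn ts a g) pt)"
      by (simp add: sum_draft_trees_Nd A_def G_def)
    also have "\<dots> = (\<Sum>a\<in>A. rf a * ((\<Prod>i<length ts. \<Sum>x\<in>draft_trees (ts ! i). wt a i x * P a i x) * (1 - sa a)))"
    proof (intro sum.cong refl)
      fix a assume a: "a \<in> A"
      have "(\<Sum>g\<in>G. pdraft Ms gtop (Nd ts) (Jn ts a g) * PS Mb Ms gtop (Nd ts) (Jn ts a g) pt)
          = (\<Sum>g\<in>G. rf a * (1 - sa a) * (\<Prod>i<length ts. wt a i (g i) * P a i (g i)))"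
        by (intro sum.cong refl) (simp add: Jpd[OF a] JPS[OF a] prod.distrib)
      also have "\<dots> = rf a * (1 - sa a) * (\<Prod>i<length ts. \<Sum>x\<in>draft_trees (ts ! i). wt a i x * P a i x)"
        by (simp add: sum_distrib_left[symmetric] PiEsum[of "\<lambda>i x. wt a i x * P a i x"])
      finally show "(\<Sum>g\<in>G. pdraft Ms gtop (Nd ts) (Jn ts a g) * PS Mb Ms gtop (Nd ts) (Jn ts a g) pt)
          = rf a * ((\<Prod>i<length ts. \<Sum>x\<in>draft_trees (ts ! i). wt a i x * P a i x) * (1 - sa a))"
        by simp
    qed
    also have "\<dots> = (\<Sum>u\<in>UNIV. R u * ((\<Prod>i<length ts. \<Sum>x\<in>draft_trees (ts ! i). wt (ext u) i x * P (ext u) i x) * (1 - sa (ext u))))"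
      by (rule red)
    also have "\<dots> = (\<Sum>u\<in>UNIV. R u * (1 - (\<Sum>y\<in>UNIV. pa (ext u) y)))"
    proof (intro sum.cong refl)
      fix u
      show "R u * ((\<Prod>i<length ts. \<Sum>x\<in>draft_trees (ts ! i). wt (ext u) i x * P (ext u) i x) * (1 - sa (ext u)))
          = R u * (1 - (\<Sum>y\<in>UNIV. pa (ext u) y))"
      proof (cases "R u = 0")
        case False
        then show ?thesis using root4[OF False] by (simp add: EP[OF False])
      qed simp
    qed
    also have "\<dots> = 1 - pt"
    proof -
      have "(\<Sum>u\<in>UNIV. R u * (1 - (\<Sum>y\<in>UNIV. pa (ext u) y))) = (\<Sum>u\<in>UNIV. R u) - (\<Sum>u\<in>UNIV. R u * (\<Sum>y\<in>UNIV. pa (ext u) y * 1))"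
        by (simp add: right_diff_distrib sum_subtractf)
      also have "\<dots> = 1 - pt" using pt_sum[of "\<lambda>_. 1"] R1 Mb1 by simp
      finally show ?thesis .
    qed
    finally show "(\<Sum>lab\<in>draft_trees (Nd ts). pdraft Ms gtop (Nd ts) lab * PS Mb Ms gtop (Nd ts) lab pt) = 1 - pt" .
  next
    fix \<Phi> assume h: "harm Mb (height (Nd ts)) \<Phi>"
    have "(\<Sum>lab\<in>draft_trees (Nd ts). pdraft Ms gtop (Nd ts) lab * US Mb Ms gtop (Nd ts) lab pt \<Phi>)
        = (\<Sum>a\<in>A. \<Sum>g\<in>G. pdraft Ms gtop (Nd ts) (Jn ts a g) * US Mb Ms gtop (Nd ts) (Jn ts a g) pt \<Phi>)"
      by (simp add: sum_draft_trees_Nd A_def G_def)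
    also have "\<dots> = (\<Sum>a\<in>A. rf a *
        ((\<Sum>i<length ts. (\<Prod>j<i. \<Sum>x\<in>draft_trees (ts ! j). wt a j x * P a j x) * (\<Sum>x\<in>draft_trees (ts ! i). wt a i x * U a \<Phi> i x)
                * (\<Prod>j\<in>{Suc i..<length ts}. \<Sum>x\<in>draft_trees (ts ! j). wt a j x))
     + (\<Prod>j<length ts. \<Sum>x\<in>draft_trees (ts ! j). wt a j x * P a j x) * (sa a * oa a \<Phi>)))"
    proof (intro sum.cong refl)
      fix a assume a: "a \<in> A"
      have "(\<Sum>g\<in>G. pdraft Ms gtop (Nd ts) (Jn ts a g) * US Mb Ms gtop (Nd ts) (Jn ts a g) pt \<Phi>)
          = rf a * (\<Sum>g\<in>G. (\<Prod>i<length ts. wt a i (g i)) *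
            ((\<Sum>i<length ts. (\<Prod>j<i. P a j (g j)) * U a \<Phi> i (g i)) + (\<Prod>j<length ts. P a j (g j)) * (sa a * oa a \<Phi>)))"
        by (simp add: sum_distrib_left Jpd[OF a] JUS[OF a] mult.assoc)
      also have "\<dots> = rf a *
        ((\<Sum>i<length ts. (\<Prod>j<i. \<Sum>x\<in>draft_trees (ts ! j). wt a j x * P a j x) * (\<Sum>x\<in>draft_trees (ts ! i). wt a i x * U a \<Phi> i x)
                * (\<Prod>j\<in>{Suc i..<length ts}. \<Sum>x\<in>draft_trees (ts ! j). wt a j x))
     + (\<Prod>j<length ts. \<Sum>x\<in>draft_trees (ts ! j). wt a j x * P a j x) * (sa a * oa a \<Phi>))"
        unfolding G_def by (subst indep) simp_all
      finally show "(\<Sum>g\<in>G. pdraft Ms gtop (Nd ts) (Jn ts a g) * US Mb Ms gtop (Nd ts) (Jn ts a g) pt \<Phi>) = rf a *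
        ((\<Sum>i<length ts. (\<Prod>j<i. \<Sum>x\<in>draft_trees (ts ! j). wt a j x * P a j x) * (\<Sum>x\<in>draft_trees (ts ! i). wt a i x * U a \<Phi> i x)
                * (\<Prod>j\<in>{Suc i..<length ts}. \<Sum>x\<in>draft_trees (ts ! j). wt a j x))
     + (\<Prod>j<length ts. \<Sum>x\<in>draft_trees (ts ! j). wt a j x * P a j x) * (sa a * oa a \<Phi>))" .
    qed
    also have "\<dots> = (\<Sum>u\<in>UNIV. R u *
        ((\<Sum>i<length ts. (\<Prod>j<i. \<Sum>x\<in>draft_trees (ts ! j). wt (ext u) j x * P (ext u) j x) * (\<Sum>x\<in>draft_trees (ts ! i). wt (ext u) i x * U (ext u) \<Phi> i x)
                * (\<Prod>j\<in>{Suc i..<length ts}. \<Sum>x\<in>draft_trees (ts ! j). wt (ext u) j x))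
     + (\<Prod>j<length ts. \<Sum>x\<in>draft_trees (ts ! j). wt (ext u) j x * P (ext u) j x) * (sa (ext u) * oa (ext u) \<Phi>)))"
      by (rule red)
    also have "\<dots> = (\<Sum>u\<in>UNIV. R u * (\<Sum>y\<in>UNIV. pa (ext u) y * \<Phi> [y]))"
    proof (intro sum.cong refl)
      fix u
      show "R u *
        ((\<Sum>i<length ts. (\<Prod>j<i. \<Sum>x\<in>draft_trees (ts ! j). wt (ext u) j x * P (ext u) j x) * (\<Sum>x\<in>draft_trees (ts ! i). wt (ext u) i x * U (ext u) \<Phi> i x)
                * (\<Prod>j\<in>{Suc i..<length ts}. \<Sum>x\<in>draft_trees (ts ! j). wt (ext u) j x))
     + (\<Prod>j<length ts. \<Sum>x\<in>draft_trees (ts ! j). wt (ext u) j x * P (ext u) j x) * (sa (ext u) * oa (ext u) \<Phi>))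
        = R u * (\<Sum>y\<in>UNIV. pa (ext u) y * \<Phi> [y])"
      proof (cases "R u = 0")
        case False
        have e1: "(\<Sum>i<length ts. (\<Prod>j<i. \<Sum>x\<in>draft_trees (ts ! j). wt (ext u) j x * P (ext u) j x) * (\<Sum>x\<in>draft_trees (ts ! i). wt (ext u) i x * U (ext u) \<Phi> i x)
                * (\<Prod>j\<in>{Suc i..<length ts}. \<Sum>x\<in>draft_trees (ts ! j). wt (ext u) j x))
           = (\<Sum>i<length ts. (\<Prod>j<i. 1 - cpa (ext u) j) * (cpa (ext u) i * \<Phi> [ext u i]))"
          by (intro sum.cong refl) (simp add: EP[OF False] EU[OF False _ h] W1)
        have e2: "(\<Prod>j<length ts. \<Sum>x\<in>draft_trees (ts ! j). wt (ext u) j x * P (ext u) j x) = (\<Prod>j<length ts. 1 - cpa (ext u) j)"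
          by (intro prod.cong refl) (simp add: EP[OF False])
        show ?thesis unfolding e1 e2 root3[OF False] ..
      qed simp
    qed
    also have "\<dots> = pt * (\<Sum>y\<in>UNIV. Mb [] y * \<Phi> [y])"
      by (rule pt_sum)
    also have "\<dots> = pt * \<Phi> []"
      using h unfolding harm_def by (drule_tac x="[]" in spec) simp
    finally show "(\<Sum>lab\<in>draft_trees (Nd ts). pdraft Ms gtop (Nd ts) lab * US Mb Ms gtop (Nd ts) lab pt \<Phi>) = pt * \<Phi> []" .
  qed
qed

lemma main: "good (Mb :: 'a::finite list \<Rightarrow> 'a \<Rightarrow> real) Ms gtop t \<Longrightarrow> 0 \<le> pt \<Longrightarrow> pt \<le> 1 \<Longrightarrow> concl Mb Ms gtop t pt"
proof (induction t arbitrary: Mb Ms gtop pt)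
  case (Nd ts)
  show ?case
  proof (cases "ts = []")
    case True
    then show ?thesis using leaf_case Nd.prems by simp
  next
    case False
    show ?thesis
    proof (rule step[OF False Nd.prems])
      fix i and Mb' Ms' :: "'a list \<Rightarrow> 'a \<Rightarrow> real" and gtop' :: "'a list \<Rightarrow> nat \<Rightarrow> 'a list" and pt' :: real
      assume "i < length ts" "good Mb' Ms' gtop' (ts ! i)" "0 \<le> pt'" "pt' \<le> 1"
      then show "concl Mb' Ms' gtop' (ts ! i) pt'" using Nd.IH[OF nth_mem] by blast
    qed
  qed
qed

lemma sst_scale: "sst q (\<lambda>v. c * e v) xs = c * sst q e xs"
  by (induction xs) (simp_all add: algebra_simps)

lemma seqprob_take: "l \<le> length os \<Longrightarrow> seqprob M (take l os) = (\<Prod>i<l. M (take i os) (os ! i))"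
  unfolding seqprob_def by (intro prod.cong) (auto simp: min_def)

lemma seqprob_split: "l \<le> length os \<Longrightarrow>
    seqprob M os = seqprob M (take l os) * (\<Prod>i\<in>{l..<length os}. M (take i os) (os ! i))"
  using prod.atLeastLessThan_concat[of 0 l "length os" "\<lambda>i. M (take i os) (os ! i)"]
  by (simp add: seqprob_take seqprob_def lessThan_atLeast0)

theorem corollary1:
  fixes Mb Ms :: "'a::finite list \<Rightarrow> 'a \<Rightarrow> real"
    and gtop :: "'a list \<Rightarrow> nat \<Rightarrow> 'a list"
    and t :: topo and D L :: nat and os :: "'a list"
  assumes Mb_nonneg: "\<forall>ctx x. 0 \<le> Mb ctx x"
    and Mb_sum: "\<forall>ctx. (\<Sum>x\<in>UNIV. Mb ctx x) = 1"
    and Ms_nonneg: "\<forall>ctx x. 0 \<le> Ms ctx x"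
    and Ms_sum: "\<forall>ctx. (\<Sum>x\<in>UNIV. Ms ctx x) = 1"
    and greedy: "\<forall>ctx k. k < card (UNIV :: 'a set) \<longrightarrow>
        length (gtop ctx k) = k \<and> distinct (gtop ctx k)
        \<and> sorted_wrt (\<lambda>x y. Ms ctx y \<le> Ms ctx x) (gtop ctx k)
        \<and> (\<forall>x\<in>set (gtop ctx k). \<forall>y. y \<notin> set (gtop ctx k) \<longrightarrow> Ms ctx y \<le> Ms ctx x)"
    and depth: "height t = D"
    and fanout: "\<forall>v\<in>set (postorder t). nch t v \<le> card (UNIV :: 'a set)"
    and residual_pos: "\<forall>ctx. \<forall>v\<in>set (postorder t). 0 < nch t v \<longrightarrow>
        0 < (\<Sum>y\<in>UNIV - set (gtop ctx (nch t v - 1)). Ms ctx y)"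
    and L: "D + 1 \<le> L"
    and len: "length os = L"
  shows "(\<Sum>lab\<in>draft_trees t. pdraft Ms gtop t lab *
           (\<Sum>l\<in>{1..L}. seqprob Mb os * univer_prob Mb Ms gtop t lab (take l os)
                          / seqprob Mb (take l os)))
         = seqprob Mb os"
proof (cases "seqprob Mb os = 0")
  case True
  then show ?thesis by simp
next
  case False
  define tailp where "tailp l = (\<Prod>i\<in>{l..<length os}. Mb (take i os) (os ! i))" for l
  define \<Phi> where "\<Phi> w = (if length w \<le> length os \<and> w = take (length w) os then tailp (length w) else 0)" for w
  have gd: "good Mb Ms gtop t"
    unfolding good_def gl_def using Mb_nonneg Mb_sum Ms_nonneg greedy fanout residual_pos by blast
  have split: "seqprob Mb os = seqprob Mb (take l os) * tailp l" if "l \<le> length os" for l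
    unfolding tailp_def using seqprob_split[OF that] .
  have hm: "harm Mb (height t) \<Phi>"
    unfolding harm_def
  proof (intro allI impI)
    fix w :: "'a list" assume w: "length w \<le> height t"
    define k where "k = length w"
    have lw: "length w = k" by (simp add: k_def)
    have kL: "k < length os" using w L len depth lw by simp
    have tk: "take (Suc k) os = take k os @ [os ! k]" using kL by (simp add: take_Suc_conv_app_nth)
    show "\<Phi> w = (\<Sum>y\<in>UNIV. Mb w y * \<Phi> (w @ [y]))"
    proof (cases "w = take k os")
      case True
      have "(\<Sum>y\<in>UNIV. Mb w y * \<Phi> (w @ [y])) = (\<Sum>y\<in>UNIV. if y = os ! k then Mb w y * tailp (Suc k) else 0)"
        by (intro sum.cong refl) (use True kL tk lw in \<open>auto simp: \<Phi>_def\<close>)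
      also have "\<dots> = Mb (take k os) (os ! k) * tailp (Suc k)" using True by simp
      also have "\<dots> = tailp k" unfolding tailp_def using kL by (simp add: prod.atLeast_Suc_lessThan)
      finally show ?thesis using True kL lw by (simp add: \<Phi>_def)
    next
      case False
      have "(\<Sum>y\<in>UNIV. Mb w y * \<Phi> (w @ [y])) = 0"
        by (intro sum.neutral ballI) (use False tk lw in \<open>auto simp: \<Phi>_def\<close>)
      then show ?thesis using False lw by (simp add: \<Phi>_def)
    qed
  qed
  have cc: "concl Mb Ms gtop t 1" using main[OF gd] by simp
  then have main_eq: "(\<Sum>lab\<in>draft_trees t. pdraft Ms gtop t lab * US Mb Ms gtop t lab 1 \<Phi>) = \<Phi> []"
    using hm unfolding concl_def by simp
  have Phi0: "\<Phi> [] = seqprob Mb os" using split[of 0] by (simp add: \<Phi>_def seqprob_def)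
  have per: "(\<Sum>l\<in>{1..L}. seqprob Mb os * univer_prob Mb Ms gtop t lab (take l os) / seqprob Mb (take l os))
      = US Mb Ms gtop t lab 1 \<Phi>" for lab
  proof -
    define q where "q = stopg Mb Ms gtop t lab 1"
    define po where "po = postorder t"
    define e where "e l v = (if length (take l os) = Suc (length v) \<and> take (length v) (take l os) = tokpath lab v
           then emitg Mb Ms gtop t lab 1 v (last (take l os)) else 0)" for l v
    have u: "univer_prob Mb Ms gtop t lab (take l os) = sst q (e l) po" for l
      unfolding univer_prob_def Let_def
      using sst_as_sum[where xs=po and q=q and e="e l"]
      by (simp add: q_def e_def po_def stopq_stopg emit_emitg cong: if_cong)
    have "(\<Sum>l\<in>{1..L}. seqprob Mb os * univer_prob Mb Ms gtop t lab (take l os) / seqprob Mb (take l os))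
        = (\<Sum>l\<in>{1..L}. tailp l * sst q (e l) po)"
    proof (intro sum.cong refl)
      fix l assume l: "l \<in> {1..L}"
      then have "l \<le> length os" using len by simp
      from split[OF this] have "seqprob Mb os = seqprob Mb (take l os) * tailp l" .
      moreover have "seqprob Mb (take l os) \<noteq> 0" using False calculation by auto
      ultimately show "seqprob Mb os * univer_prob Mb Ms gtop t lab (take l os) / seqprob Mb (take l os)
          = tailp l * sst q (e l) po" by (simp add: u)
    qed
    also have "\<dots> = sst q (\<lambda>v. \<Sum>l\<in>{1..L}. tailp l * e l v) po"
      by (simp add: sst_sum sst_scale)
    also have "\<dots> = sst q (outv Mb Ms gtop t lab 1 \<Phi>) po"
    proof (rule sst_cong)
      fix v assume v: "v \<in> set po"
      define k where "k = length v"
      have kL: "k < L" using length_postorder_le[of v t] v L depth by (simp add: po_def k_def)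
      have tk: "take (Suc k) os = take k os @ [os ! k]" using kL len by (simp add: take_Suc_conv_app_nth)
      have "(\<Sum>l\<in>{1..L}. tailp l * e l v) = (\<Sum>l\<in>{1..L}. if l = Suc k then tailp (Suc k) * e (Suc k) v else 0)"
        by (intro sum.cong refl) (use len in \<open>auto simp: e_def k_def min_def\<close>)
      also have "\<dots> = tailp (Suc k) * e (Suc k) v" using kL by simp
      also have "\<dots> = (if tokpath lab v = take k os then emitg Mb Ms gtop t lab 1 v (os ! k) * tailp (Suc k) else 0)"
        using kL len tk by (auto simp: e_def k_def min_def)
      also have "\<dots> = outv Mb Ms gtop t lab 1 \<Phi> v"
      proof -
        have phi: "\<Phi> (tokpath lab v @ [y]) = (if tokpath lab v = take k os \<and> y = os ! k then tailp (Suc k) else 0)" for y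
          using kL len tk by (auto simp: \<Phi>_def k_def)
        have "outv Mb Ms gtop t lab 1 \<Phi> v = (\<Sum>y\<in>UNIV. if tokpath lab v = take k os \<and> y = os ! k
              then emitg Mb Ms gtop t lab 1 v y * tailp (Suc k) else 0)"
          unfolding outv_def by (intro sum.cong refl) (simp add: phi)
        also have "\<dots> = (if tokpath lab v = take k os then emitg Mb Ms gtop t lab 1 v (os ! k) * tailp (Suc k) else 0)"
          by (cases "tokpath lab v = take k os") simp_all
        finally show ?thesis by simp
      qed
      finally show "(\<Sum>l\<in>{1..L}. tailp l * e l v) = outv Mb Ms gtop t lab 1 \<Phi> v" .
    qed simp
    finally show ?thesis by (simp add: US_def q_def po_def)
  qed
  show ?thesis unfolding per using main_eq Phi0 by simp
qed

end
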